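(* Let $(G,X,\Gamma)$ be a $(\mu,\nu)$-path system group containing a $\delta$-constricting element $(g,A)$ with $\delta$-constricting map $\pi_A\colon X\to A$. For every $\varepsilon\ge0$ and $\theta\ge0$ there exists $M\in\mathbb N_{\ge1}$ with the following property. Let $H\le G$ be a subgroup and $Y\subseteq X$ a non-empty $H$-invariant subset with $\operatorname{diam}_A(Y)\le\varepsilon$. Then for every $u\in\langle g^M, H\cap E(g,A)\rangle\setminus (H\cap E(g,A))$, we have $d_A(Y,uY)>\theta$.
   Context: A path is a rectifiable continuous map $\alpha\colon[a,b]\to X$ parametrised by arc length; it is a $(\kappa,\lambda)$-quasi-geodesic if $d(\alpha(t),\alpha(t'))\le|t-t'|\le\kappa d(\alpha(t),\alpha(t'))+\lambda$. A $(\mu,\nu)$-path system group $(G,X,\Gamma)$ is a group $G$ acting properly by isometries on a geodesic metric space $X$ together with a $G$-invariant collection $\Gamma$ of paths closed under subpaths, such that any two points are joined by an element of $\Gamma$ and every element is a $(\mu,\nu)$-quasi-geodesic. A map $\pi_A\colon X\to A$ is $\delta$-constricting if (CS1) $d(x,\pi_A(x))\le\delta$ for $x\in A$, and (CS2) for all $x,y\in X$ and $\gamma\in\Gamma$ joining them, if $d(\pi_A(x),\pi_A(y))>\delta$ then $\gamma$ meets $B_X(\pi_A(x),\delta)$ and $B_X(\pi_A(y),\delta)$. An element $g$ is $\delta$-constricting, written $(g,A)$, if it has infinite order and $A$ is a $\langle g\rangle$-invariant subset with a $\delta$-constricting map, on which $\langle g\rangle$ acts $\delta$-coboundedly. $\operatorname{diam}_A(Y)=\operatorname{diam}(\pi_A(Y))$,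 $d_A(Y,Z)=\inf\{d(\pi_A(y),\pi_A(z)): y\in Y,z\in Z\}$. The elementary closure is $E(g,A)=\{u\in G: d_{Haus}(uA,A)<\infty\}$. *)

theory Defs
  imports "HOL-Analysis.Analysis" "HOL-Algebra.Group_Action" "HOL-Algebra.Generated_Groups"
begin

text \<open>Metric space X is the whole type 'x (class metric_space).
 A path is a triple (a, b, alpha) with alpha restricted to the interval [a,b].\<close>

type_synonym 'x pth = "real \<times> real \<times> (real \<Rightarrow> 'x)"

definition geodesic_space :: "'x::metric_space itself \<Rightarrow> bool" where
  "geodesic_space _ \<longleftrightarrow> (\<forall>x y::'x. \<exists>\<gamma>. \<gamma> 0 = x \<and> \<gamma> (dist x y) = y \<and>
     (\<forall>s\<in>{0..dist x y}. \<forall>t\<in>{0..dist x y}. dist (\<gamma> s) (\<gamma> t) = \<bar>s - t\<bar>))"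

definition path_length :: "(real \<Rightarrow> 'x::metric_space) \<Rightarrow> real \<Rightarrow> real \<Rightarrow> ereal" where
  "path_length \<alpha> s t = (SUP (p, n) \<in> {(p, n). p 0 = s \<and> p n = t \<and> (\<forall>i<n. p i \<le> p (Suc i))}.
       ereal (\<Sum>i<n. dist (\<alpha> (p i)) (\<alpha> (p (Suc i)))))"

definition arc_path :: "'x::metric_space pth \<Rightarrow> bool" where
  "arc_path P = (case P of (a, b, \<alpha>) \<Rightarrow> a \<le> b \<and> continuous_on {a..b} \<alpha> \<and>
     (\<forall>s t. a \<le> s \<and> s \<le> t \<and> t \<le> b \<longrightarrow> path_length \<alpha> s t = ereal (t - s)))"

definition quasi_geodesic :: "real \<Rightarrow> real \<Rightarrow> 'x::metric_space pth \<Rightarrow> bool" where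
  "quasi_geodesic \<kappa> lam P = (case P of (a, b, \<alpha>) \<Rightarrow>
     (\<forall>t\<in>{a..b}. \<forall>t'\<in>{a..b}. dist (\<alpha> t) (\<alpha> t') \<le> \<bar>t - t'\<bar> \<and>
        \<bar>t - t'\<bar> \<le> \<kappa> * dist (\<alpha> t) (\<alpha> t') + lam))"

definition joins :: "'x pth \<Rightarrow> 'x \<Rightarrow> 'x \<Rightarrow> bool" where
  "joins P x y = (case P of (a, b, \<alpha>) \<Rightarrow> \<alpha> a = x \<and> \<alpha> b = y)"

definition path_image :: "'x pth \<Rightarrow> 'x set" where
  "path_image P = (case P of (a, b, \<alpha>) \<Rightarrow> \<alpha> ` {a..b})"

definition proper_action :: "('g, 'm) monoid_scheme \<Rightarrow> ('g \<Rightarrow> 'x::metric_space \<Rightarrow> 'x) \<Rightarrow> bool" where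
  "proper_action G \<phi> \<longleftrightarrow> (\<forall>x r. finite {h \<in> carrier G. \<exists>y. dist x y \<le> r \<and> dist x (\<phi> h y) \<le> r})"

definition path_system_group ::
  "real \<Rightarrow> real \<Rightarrow> ('g, 'm) monoid_scheme \<Rightarrow> ('g \<Rightarrow> 'x::metric_space \<Rightarrow> 'x) \<Rightarrow> 'x pth set \<Rightarrow> bool" where
  "path_system_group \<mu> \<nu> G \<phi> \<Gamma> \<longleftrightarrow>
     group_action G UNIV \<phi> \<and>
     (\<forall>h\<in>carrier G. \<forall>x y. dist (\<phi> h x) (\<phi> h y) = dist x y) \<and>
     proper_action G \<phi> \<and>
     geodesic_space TYPE('x) \<and>
     (\<forall>h\<in>carrier G. \<forall>(a, b, \<alpha>)\<in>\<Gamma>. (a, b, \<phi> h \<circ> \<alpha>) \<in> \<Gamma>) \<and>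
     (\<forall>(a, b, \<alpha>)\<in>\<Gamma>. \<forall>a' b'. a \<le> a' \<and> a' \<le> b' \<and> b' \<le> b \<longrightarrow> (a', b', \<alpha>) \<in> \<Gamma>) \<and>
     (\<forall>x y. \<exists>P\<in>\<Gamma>. joins P x y) \<and>
     (\<forall>P\<in>\<Gamma>. arc_path P \<and> quasi_geodesic \<mu> \<nu> P)"

definition constricting_map ::
  "'x::metric_space pth set \<Rightarrow> real \<Rightarrow> 'x set \<Rightarrow> ('x \<Rightarrow> 'x) \<Rightarrow> bool" where
  "constricting_map \<Gamma> \<delta> A \<pi> \<longleftrightarrow> range \<pi> \<subseteq> A \<and>
     (\<forall>x\<in>A. dist x (\<pi> x) \<le> \<delta>) \<and>
     (\<forall>x y. \<forall>P\<in>\<Gamma>. joins P x y \<and> dist (\<pi> x) (\<pi> y) > \<delta> \<longrightarrow>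
        path_image P \<inter> cball (\<pi> x) \<delta> \<noteq> {} \<and> path_image P \<inter> cball (\<pi> y) \<delta> \<noteq> {})"

definition constricting_element ::
  "('g, 'm) monoid_scheme \<Rightarrow> ('g \<Rightarrow> 'x::metric_space \<Rightarrow> 'x) \<Rightarrow> 'x pth set \<Rightarrow> real \<Rightarrow> 'g \<Rightarrow> 'x set \<Rightarrow> ('x \<Rightarrow> 'x) \<Rightarrow> bool" where
  "constricting_element G \<phi> \<Gamma> \<delta> g A \<pi> \<longleftrightarrow>
     g \<in> carrier G \<and> (\<forall>n::nat. n > 0 \<longrightarrow> g [^]\<^bsub>G\<^esub> n \<noteq> \<one>\<^bsub>G\<^esub>) \<and>
     (\<forall>n::int. \<phi> (g [^]\<^bsub>G\<^esub> n) ` A = A) \<and>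
     constricting_map \<Gamma> \<delta> A \<pi> \<and>
     (\<forall>x\<in>A. \<forall>y\<in>A. \<exists>n::int. dist (\<phi> (g [^]\<^bsub>G\<^esub> n) x) y \<le> \<delta>)"

definition elem_closure :: "('g, 'm) monoid_scheme \<Rightarrow> ('g \<Rightarrow> 'x::metric_space \<Rightarrow> 'x) \<Rightarrow> 'x set \<Rightarrow> 'g set" where
  "elem_closure G \<phi> A = {u \<in> carrier G. \<exists>r::real.
     (\<forall>a\<in>A. \<exists>b\<in>A. dist (\<phi> u a) b \<le> r) \<and> (\<forall>b\<in>A. \<exists>a\<in>A. dist b (\<phi> u a) \<le> r)}"

definition proj_dist :: "('x::metric_space \<Rightarrow> 'x) \<Rightarrow> 'x set \<Rightarrow> 'x set \<Rightarrow> real" where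
  "proj_dist \<pi> Y Z = Inf {dist (\<pi> y) (\<pi> z) | y z. y \<in> Y \<and> z \<in> Z}"

end

theory Submission imports Defs begin

locale psg =
  fixes G :: "('g, 'm) monoid_scheme" (structure)
    and \<phi> :: "'g \<Rightarrow> 'x::metric_space \<Rightarrow> 'x"
    and \<Gamma> :: "'x pth set" and \<mu> \<nu> \<delta> :: real and g :: 'g and A :: "'x set" and \<pi> :: "'x \<Rightarrow> 'x"
  assumes PS: "path_system_group \<mu> \<nu> G \<phi> \<Gamma>"
    and CE: "constricting_element G \<phi> \<Gamma> \<delta> g A \<pi>"
begin

lemma GA: "group_action G UNIV \<phi>" using PS unfolding path_system_group_def by auto

lemma grp: "group G"
  using GA unfolding group_action_def group_hom_def by auto

sublocale group G by (rule grp)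

lemma act_mult: "h \<in> carrier G \<Longrightarrow> k \<in> carrier G \<Longrightarrow> \<phi> (h \<otimes> k) x = \<phi> h (\<phi> k x)"
  using group_action.composition_rule[OF GA] by auto

lemma act_one: "\<phi> \<one> x = x"
  using group_action.id_eq_one[OF GA] by (metis restrict_apply' UNIV_I)

lemma act_inv1: "h \<in> carrier G \<Longrightarrow> \<phi> (inv h) (\<phi> h x) = x"
  by (metis act_mult act_one inv_closed l_inv)

lemma act_inv2: "h \<in> carrier G \<Longrightarrow> \<phi> h (\<phi> (inv h) x) = x"
  by (metis act_mult act_one inv_closed r_inv)

lemma iso: "h \<in> carrier G \<Longrightarrow> dist (\<phi> h x) (\<phi> h y) = dist x y"
  using PS unfolding path_system_group_def by auto

lemma proper: "finite {h \<in> carrier G. \<exists>y. dist x y \<le> r \<and> dist x (\<phi> h y) \<le> r}"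
  using PS unfolding path_system_group_def proper_action_def by auto

lemma path_exists: "\<exists>a b \<alpha>. (a, b, \<alpha>) \<in> \<Gamma> \<and> \<alpha> a = x \<and> \<alpha> b = y \<and> a \<le> b"
proof -
  obtain P where P: "P \<in> \<Gamma>" "joins P x y" using PS unfolding path_system_group_def by blast
  obtain a b \<alpha> where Pe: "P = (a, b, \<alpha>)" by (cases P) auto
  have "arc_path P" using P PS unfolding path_system_group_def by auto
  then have "a \<le> b" using Pe unfolding arc_path_def by auto
  then show ?thesis using P Pe unfolding joins_def by auto
qed

lemma path_qg: "(a, b, \<alpha>) \<in> \<Gamma> \<Longrightarrow> s \<in> {a..b} \<Longrightarrow> t \<in> {a..b} \<Longrightarrow>
   dist (\<alpha> s) (\<alpha> t) \<le> \<bar>s - t\<bar> \<and> \<bar>s - t\<bar> \<le> \<mu> * dist (\<alpha> s) (\<alpha> t) + \<nu>"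
proof -
  assume "(a, b, \<alpha>) \<in> \<Gamma>" "s \<in> {a..b}" "t \<in> {a..b}"
  moreover have "quasi_geodesic \<mu> \<nu> (a, b, \<alpha>)" using \<open>(a, b, \<alpha>) \<in> \<Gamma>\<close> PS
    unfolding path_system_group_def by auto
  ultimately show ?thesis unfolding quasi_geodesic_def by auto
qed

lemma path_sub: "(a, b, \<alpha>) \<in> \<Gamma> \<Longrightarrow> a \<le> a' \<Longrightarrow> a' \<le> b' \<Longrightarrow> b' \<le> b \<Longrightarrow> (a', b', \<alpha>) \<in> \<Gamma>"
  using PS unfolding path_system_group_def by fast

lemma path_trans: "h \<in> carrier G \<Longrightarrow> (a, b, \<alpha>) \<in> \<Gamma> \<Longrightarrow> (a, b, \<phi> h \<circ> \<alpha>) \<in> \<Gamma>"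
  using PS unfolding path_system_group_def by fast

lemma CM: "constricting_map \<Gamma> \<delta> A \<pi>" using CE unfolding constricting_element_def by auto

lemma pi_in: "\<pi> x \<in> A" using CM unfolding constricting_map_def by auto

lemma pi_near: "x \<in> A \<Longrightarrow> dist x (\<pi> x) \<le> \<delta>" using CM unfolding constricting_map_def by auto

lemma cs2: assumes "(a, b, \<alpha>) \<in> \<Gamma>" "a \<le> b" "dist (\<pi> (\<alpha> a)) (\<pi> (\<alpha> b)) > \<delta>"
  shows "(\<exists>t\<in>{a..b}. dist (\<alpha> t) (\<pi> (\<alpha> a)) \<le> \<delta>) \<and> (\<exists>t\<in>{a..b}. dist (\<alpha> t) (\<pi> (\<alpha> b)) \<le> \<delta>)"
proof -
  have "joins (a, b, \<alpha>) (\<alpha> a) (\<alpha> b)" unfolding joins_def by auto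
  then have "path_image (a, b, \<alpha>) \<inter> cball (\<pi> (\<alpha> a)) \<delta> \<noteq> {} \<and> path_image (a, b, \<alpha>) \<inter> cball (\<pi> (\<alpha> b)) \<delta> \<noteq> {}"
    using CM assms unfolding constricting_map_def by blast
  then show ?thesis unfolding path_image_def by (auto simp: dist_commute) (meson atLeastAtMost_iff)+
qed

lemma g_carrier: "g \<in> carrier G" using CE unfolding constricting_element_def by auto

lemma g_inf: "n > 0 \<Longrightarrow> g [^] (n::nat) \<noteq> \<one>" using CE unfolding constricting_element_def by auto

lemma A_inv: "\<phi> (g [^] (n::int)) ` A = A" using CE unfolding constricting_element_def by auto

lemma A_cob: "x \<in> A \<Longrightarrow> y \<in> A \<Longrightarrow> \<exists>n::int. dist (\<phi> (g [^] n) x) y \<le> \<delta>"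
  using CE unfolding constricting_element_def by auto

definition x0 where "x0 = \<pi> undefined"
definition orb where "orb n = \<phi> (g [^] (n::int)) x0"

lemma x0A: "x0 \<in> A" unfolding x0_def by (rule pi_in)

lemma orbA: "orb n \<in> A" using A_inv[of n] x0A unfolding orb_def by blast

lemma orb_near: "a \<in> A \<Longrightarrow> \<exists>n. dist (orb n) a \<le> \<delta>" using A_cob[OF x0A] unfolding orb_def by auto

lemma orb_dist: "dist (orb m) (orb n) = dist x0 (orb (n - m))"
proof -
  have "dist (orb m) (orb n) = dist (\<phi> (inv (g [^] m)) (orb m)) (\<phi> (inv (g [^] m)) (orb n))"
    using iso g_carrier by simp
  also have "\<phi> (inv (g [^] m)) (orb m) = x0" unfolding orb_def using act_inv1 g_carrier by simp
  also have "\<phi> (inv (g [^] m)) (orb n) = orb (n - m)" unfolding orb_def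
    using g_carrier act_mult[symmetric] int_pow_mult[of g "-m" n] int_pow_neg[of g m] by simp
  finally show ?thesis .
qed


lemma delta_ge0: "\<delta> \<ge> 0" using pi_near[OF x0A] by (meson zero_le_dist order_trans)

lemma gpow_inj: "g [^] (m::int) = g [^] n \<Longrightarrow> m = n"
proof (rule ccontr)
  assume e: "g [^] m = g [^] n" and ne: "m \<noteq> n"
  have one: "g [^] (m - n) = \<one>" using e int_pow_diff[OF g_carrier, of m n] g_carrier by simp
  show False
  proof (cases "m - n > 0")
    case True
    then have "g [^] (nat (m - n)) = \<one>" using one int_pow_int[of G g "nat (m-n)"] by simp
    then show False using g_inf[of "nat (m - n)"] True by simp
  next
    case False
    then have pos: "n - m > 0" using ne by simp
    have "g [^] (n - m) = inv (g [^] (m - n))" using int_pow_neg[OF g_carrier, of "m - n"] by simp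
    then have "g [^] (n - m) = \<one>" using one by simp
    then have "g [^] (nat (n - m)) = \<one>" using pos int_pow_int[of G g "nat (n-m)"] by simp
    then show False using g_inf[of "nat (n - m)"] pos by simp
  qed
qed

lemma fin_disp_set: "finite {h \<in> carrier G. dist x (\<phi> h x) \<le> r}"
proof -
  have "{h \<in> carrier G. dist x (\<phi> h x) \<le> r} \<subseteq> {h \<in> carrier G. \<exists>y. dist x y \<le> r \<and> dist x (\<phi> h y) \<le> r}"
  proof
    fix h assume "h \<in> {h \<in> carrier G. dist x (\<phi> h x) \<le> r}"
    moreover then have "dist x x \<le> r" using order_trans[OF zero_le_dist[of x "\<phi> h x"]] by auto
    ultimately show "h \<in> {h \<in> carrier G. \<exists>y. dist x y \<le> r \<and> dist x (\<phi> h y) \<le> r}" by blast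
  qed
  then show ?thesis using proper finite_subset by blast
qed

lemma fin_orb: "finite {n::int. dist x0 (orb n) \<le> r}"
proof -
  have "inj_on (\<lambda>n. g [^] n) {n::int. dist x0 (orb n) \<le> r}" using gpow_inj by (auto simp: inj_on_def)
  moreover have "(\<lambda>n. g [^] n) ` {n::int. dist x0 (orb n) \<le> r} \<subseteq> {h \<in> carrier G. dist x0 (\<phi> h x0) \<le> r}"
    using g_carrier unfolding orb_def by auto
  moreover have "finite {h \<in> carrier G. dist x0 (\<phi> h x0) \<le> r}" by (rule fin_disp_set)
  ultimately show ?thesis using finite_imageD finite_subset by blast
qed

lemma finite_int_bounded: "finite (S::int set) \<Longrightarrow> \<exists>B::nat. \<forall>n\<in>S. \<bar>n\<bar> \<le> int B"
proof (induction S rule: finite_induct)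
  case empty then show ?case by auto
next
  case (insert x F)
  then obtain B where "\<forall>n\<in>F. \<bar>n\<bar> \<le> int B" by auto
  then have "\<forall>n\<in>insert x F. \<bar>n\<bar> \<le> int (max B (nat \<bar>x\<bar>))" by auto
  then show ?case by blast
qed

lemma orb_bound: "\<exists>B::nat. \<forall>n. dist x0 (orb n) \<le> r \<longrightarrow> \<bar>n\<bar> \<le> int B"
  using finite_int_bounded[OF fin_orb[of r]] by auto

lemma orb_far: "\<exists>N::nat. \<forall>n. \<bar>n\<bar> \<ge> int N \<longrightarrow> dist x0 (orb n) > r"
proof -
  obtain B where B: "\<forall>n. dist x0 (orb n) \<le> r \<longrightarrow> \<bar>n\<bar> \<le> int B" using orb_bound by blast
  have "\<forall>n. \<bar>n\<bar> \<ge> int (B+1) \<longrightarrow> dist x0 (orb n) > r"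
  proof (intro allI impI)
    fix n assume "\<bar>n\<bar> \<ge> int (B+1)"
    then show "dist x0 (orb n) > r" using B[rule_format, of n] by linarith
  qed
  then show ?thesis by blast
qed

lemma path_ends: "(a, b, \<alpha>) \<in> \<Gamma> \<Longrightarrow> a \<le> b \<Longrightarrow> b - a \<le> \<mu> * dist (\<alpha> a) (\<alpha> b) + \<nu>"
  using path_qg[of a b \<alpha> a b] by auto

lemma nu_ge0: "\<nu> \<ge> 0"
proof -
  obtain a b \<alpha> where "(a, b, \<alpha>) \<in> \<Gamma>" "a \<le> b" using path_exists by blast
  then show ?thesis using path_qg[of a b \<alpha> a a] by auto
qed

lemma dist_le_path: "\<exists>a b \<alpha>. (a, b, \<alpha>) \<in> \<Gamma> \<and> \<alpha> a = x \<and> \<alpha> b = y \<and> a \<le> b \<and> dist x y \<le> b - a \<and> b - a \<le> \<mu> * dist x y + \<nu>"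
proof -
  obtain a b \<alpha> where P: "(a, b, \<alpha>) \<in> \<Gamma>" "\<alpha> a = x" "\<alpha> b = y" "a \<le> b" using path_exists by blast
  then show ?thesis using path_qg[of a b \<alpha> a b] by (intro exI[of _ a] exI[of _ b] exI[of _ \<alpha>]) auto
qed

lemma mu_ge1: "\<mu> \<ge> 1"
proof (rule ccontr)
  assume "\<not> \<mu> \<ge> 1"
  then have m: "1 - \<mu> > 0" by simp
  obtain N where N: "\<forall>n. \<bar>n\<bar> \<ge> int N \<longrightarrow> dist x0 (orb n) > \<nu> / (1 - \<mu>)" using orb_far by blast
  have d: "dist x0 (orb (int N)) > \<nu> / (1 - \<mu>)" using N by auto
  obtain a b \<alpha> where "dist x0 (orb (int N)) \<le> b - a" "b - a \<le> \<mu> * dist x0 (orb (int N)) + \<nu>"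
    using dist_le_path by blast
  then have "(1 - \<mu>) * dist x0 (orb (int N)) \<le> \<nu>" by (simp add: algebra_simps)
  then have "dist x0 (orb (int N)) \<le> \<nu> / (1 - \<mu>)" using m by (simp add: field_simps)
  then show False using d by simp
qed

definition Lip where "Lip c = \<mu> * c + \<nu> + 2 * \<delta>"

lemma Lip_mono: "c \<le> c' \<Longrightarrow> Lip c \<le> Lip c'"
  unfolding Lip_def using mu_ge1 by (simp add: mult_left_mono)

lemma Lip_ge: "c \<ge> 0 \<Longrightarrow> Lip c \<ge> 2 * \<delta>"
  unfolding Lip_def using mu_ge1 nu_ge0 by (simp add: mult_nonneg_nonneg)

lemma pi_lip: "dist (\<pi> x) (\<pi> y) \<le> Lip (dist x y)"
proof (cases "dist (\<pi> x) (\<pi> y) > \<delta>")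
  case False
  then show ?thesis using Lip_ge[of "dist x y"] delta_ge0 by simp
next
  case True
  obtain a b \<alpha> where P: "(a, b, \<alpha>) \<in> \<Gamma>" "\<alpha> a = x" "\<alpha> b = y" "a \<le> b" using path_exists by blast
  obtain t1 t2 where t: "t1 \<in> {a..b}" "t2 \<in> {a..b}" "dist (\<alpha> t1) (\<pi> x) \<le> \<delta>" "dist (\<alpha> t2) (\<pi> y) \<le> \<delta>"
    using cs2[OF P(1) P(4)] P True by auto
  have "dist (\<alpha> t1) (\<alpha> t2) \<le> \<bar>t1 - t2\<bar>" using path_qg[OF P(1) t(1,2)] by auto
  also have "\<bar>t1 - t2\<bar> \<le> b - a" using t by auto
  also have "b - a \<le> \<mu> * dist x y + \<nu>" using path_ends[OF P(1) P(4)] P by simp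
  finally have "dist (\<alpha> t1) (\<alpha> t2) \<le> \<mu> * dist x y + \<nu>" .
  moreover have "dist (\<pi> x) (\<pi> y) \<le> dist (\<alpha> t1) (\<pi> x) + dist (\<alpha> t1) (\<alpha> t2) + dist (\<alpha> t2) (\<pi> y)"
    using dist_triangle[of "\<pi> x" "\<pi> y" "\<alpha> t1"] dist_triangle[of "\<alpha> t1" "\<pi> y" "\<alpha> t2"] by (simp add: dist_commute)
  ultimately show ?thesis using t unfolding Lip_def by linarith
qed


lemma qg_up: "(a, b, \<alpha>) \<in> \<Gamma> \<Longrightarrow> s \<in> {a..b} \<Longrightarrow> t \<in> {a..b} \<Longrightarrow> dist (\<alpha> s) (\<alpha> t) \<le> D \<Longrightarrow>
   \<bar>s - t\<bar> \<le> \<mu> * D + \<nu>"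
proof -
  assume P: "(a, b, \<alpha>) \<in> \<Gamma>" "s \<in> {a..b}" "t \<in> {a..b}" "dist (\<alpha> s) (\<alpha> t) \<le> D"
  have "\<mu> * dist (\<alpha> s) (\<alpha> t) \<le> \<mu> * D" using P(4) mu_ge1 by (simp add: mult_left_mono)
  then show ?thesis using path_qg[OF P(1-3)] by linarith
qed

lemma qg_lo: "(a, b, \<alpha>) \<in> \<Gamma> \<Longrightarrow> s \<in> {a..b} \<Longrightarrow> t \<in> {a..b} \<Longrightarrow> dist (\<alpha> s) (\<alpha> t) \<le> \<bar>s - t\<bar>"
  using path_qg by blast

lemma mid: assumes P: "(a, b, \<alpha>) \<in> \<Gamma>" and t: "a \<le> t" "t \<le> b"
  and d1: "dist (\<pi> (\<alpha> a)) (\<pi> (\<alpha> t)) > \<delta>" and d2: "dist (\<pi> (\<alpha> t)) (\<pi> (\<alpha> b)) > \<delta>"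
  shows "dist (\<alpha> t) (\<pi> (\<alpha> t)) \<le> 2 * \<mu> * \<delta> + \<nu> + \<delta>"
proof -
  have P1: "(a, t, \<alpha>) \<in> \<Gamma>" using path_sub[OF P] t by auto
  have P2: "(t, b, \<alpha>) \<in> \<Gamma>" using path_sub[OF P] t by auto
  obtain s where s: "s \<in> {a..t}" "dist (\<alpha> s) (\<pi> (\<alpha> t)) \<le> \<delta>" using cs2[OF P1 t(1) d1] by auto
  obtain s' where s': "s' \<in> {t..b}" "dist (\<alpha> s') (\<pi> (\<alpha> t)) \<le> \<delta>" using cs2[OF P2 t(2) d2] by auto
  have "dist (\<alpha> s) (\<alpha> s') \<le> 2 * \<delta>" using s s' dist_triangle[of "\<alpha> s" "\<alpha> s'" "\<pi> (\<alpha> t)"]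
    by (simp add: dist_commute)
  then have "\<bar>s - s'\<bar> \<le> \<mu> * (2 * \<delta>) + \<nu>" using qg_up[OF P, of s s'] s s' t by auto
  moreover have "dist (\<alpha> t) (\<alpha> s) \<le> \<bar>t - s\<bar>" using qg_lo[OF P, of t s] s t by auto
  moreover have "\<bar>t - s\<bar> \<le> \<bar>s - s'\<bar>" using s s' by auto
  moreover have "dist (\<alpha> t) (\<pi> (\<alpha> t)) \<le> dist (\<alpha> t) (\<alpha> s) + dist (\<alpha> s) (\<pi> (\<alpha> t))" by (rule dist_triangle)
  ultimately show ?thesis using s by (simp add: algebra_simps)
qed

definition ec where "ec c = c + Lip c + \<delta>"

lemma near_pi: "p \<in> A \<Longrightarrow> dist x p \<le> c \<Longrightarrow> dist x (\<pi> x) \<le> ec c"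
proof -
  assume p: "p \<in> A" "dist x p \<le> c"
  have "dist (\<pi> x) (\<pi> p) \<le> Lip c" using pi_lip[of x p] Lip_mono[OF p(2)] by linarith
  moreover have "dist p (\<pi> p) \<le> \<delta>" using pi_near p by auto
  moreover have "dist x (\<pi> x) \<le> dist x p + dist p (\<pi> p) + dist (\<pi> p) (\<pi> x)"
    using dist_triangle[of x "\<pi> x" p] dist_triangle[of p "\<pi> x" "\<pi> p"] by linarith
  ultimately show ?thesis using p unfolding ec_def by (simp add: dist_commute)
qed

lemma ec_ge: "c \<ge> 0 \<Longrightarrow> ec c \<ge> 0" unfolding ec_def using Lip_ge[of c] delta_ge0 by linarith

definition Qc where "Qc c = (2 * \<mu> * \<delta> + \<nu> + \<delta>) + \<mu> * (2 * ec c + 2 * \<delta>) + \<nu> + c"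

lemma QC: assumes P: "(a, b, \<alpha>) \<in> \<Gamma>" and ab: "a \<le> b" and c: "c \<ge> 0"
  and p: "p \<in> A" "dist (\<alpha> a) p \<le> c" and q: "q \<in> A" "dist (\<alpha> b) q \<le> c"
  and t: "t \<in> {a..b}"
  shows "\<exists>z\<in>A. dist (\<alpha> t) z \<le> Qc c"
proof -
  let ?x = "\<alpha> a" and ?y = "\<alpha> b" and ?z = "\<alpha> t"
  have ex: "dist ?x (\<pi> ?x) \<le> ec c" using near_pi p by blast
  have ey: "dist ?y (\<pi> ?y) \<le> ec c" using near_pi q by blast
  have e0: "ec c \<ge> 0" using ec_ge c by simp
  have m0: "\<mu> \<ge> 1" "\<nu> \<ge> 0" "\<delta> \<ge> 0" using mu_ge1 nu_ge0 delta_ge0 by auto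
  have t': "a \<le> t" "t \<le> b" using t by auto
  have b1: "2 * \<mu> * \<delta> + \<nu> + \<delta> \<le> Qc c" unfolding Qc_def using m0 e0 c
    by (simp add: mult_nonneg_nonneg)
  have b2: "\<mu> * (2 * \<delta> + ec c) + \<nu> + c \<le> Qc c"
  proof -
    have "\<mu> * (2 * \<delta> + ec c) \<le> \<mu> * (2 * ec c + 2 * \<delta>)" using m0 e0 by (simp add: mult_left_mono)
    moreover have "0 \<le> 2 * \<mu> * \<delta> + \<nu> + \<delta>" using m0 by (simp add: mult_nonneg_nonneg)
    ultimately show ?thesis unfolding Qc_def by linarith
  qed
  have b3: "\<mu> * (2 * ec c + 2 * \<delta>) + \<nu> + c \<le> Qc c" unfolding Qc_def using m0
    by (simp add: mult_nonneg_nonneg)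
  show ?thesis
  proof (cases "dist (\<pi> ?x) (\<pi> ?z) > \<delta>")
    case C1: True
    show ?thesis
    proof (cases "dist (\<pi> ?z) (\<pi> ?y) > \<delta>")
      case True
      then have "dist ?z (\<pi> ?z) \<le> 2 * \<mu> * \<delta> + \<nu> + \<delta>" using mid[OF P t' C1] by simp
      then show ?thesis using pi_in b1 by (meson order_trans)
    next
      case False
      have P1: "(a, t, \<alpha>) \<in> \<Gamma>" using path_sub[OF P] t by auto
      obtain s where s: "s \<in> {a..t}" "dist (\<alpha> s) (\<pi> ?z) \<le> \<delta>" using cs2[OF P1 t'(1) C1] by auto
      have "dist (\<alpha> s) ?y \<le> dist (\<alpha> s) (\<pi> ?z) + dist (\<pi> ?z) (\<pi> ?y) + dist (\<pi> ?y) ?y"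
        using dist_triangle[of "\<alpha> s" ?y "\<pi> ?z"] dist_triangle[of "\<pi> ?z" ?y "\<pi> ?y"] by linarith
      then have "dist (\<alpha> s) ?y \<le> 2 * \<delta> + ec c" using s False ey by (simp add: dist_commute)
      then have "\<bar>s - b\<bar> \<le> \<mu> * (2 * \<delta> + ec c) + \<nu>" using qg_up[OF P, of s b] s t ab by auto
      moreover have "dist ?z ?y \<le> \<bar>t - b\<bar>" using qg_lo[OF P, of t b] t by auto
      moreover have "\<bar>t - b\<bar> \<le> \<bar>s - b\<bar>" using s t by auto
      moreover have "dist ?z q \<le> dist ?z ?y + dist ?y q" by (rule dist_triangle)
      ultimately have "dist ?z q \<le> \<mu> * (2 * \<delta> + ec c) + \<nu> + c" using q by linarith
      then show ?thesis using q b2 by (meson order_trans)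
    qed
  next
    case C2: False
    show ?thesis
    proof (cases "dist (\<pi> ?z) (\<pi> ?y) > \<delta>")
      case True
      have P2: "(t, b, \<alpha>) \<in> \<Gamma>" using path_sub[OF P] t by auto
      obtain s where s: "s \<in> {t..b}" "dist (\<alpha> s) (\<pi> ?z) \<le> \<delta>" using cs2[OF P2 t'(2) True] by auto
      have "dist (\<alpha> s) ?x \<le> dist (\<alpha> s) (\<pi> ?z) + dist (\<pi> ?z) (\<pi> ?x) + dist (\<pi> ?x) ?x"
        using dist_triangle[of "\<alpha> s" ?x "\<pi> ?z"] dist_triangle[of "\<pi> ?z" ?x "\<pi> ?x"] by linarith
      then have "dist (\<alpha> s) ?x \<le> 2 * \<delta> + ec c" using s C2 ex by (simp add: dist_commute)
      then have "\<bar>s - a\<bar> \<le> \<mu> * (2 * \<delta> + ec c) + \<nu>" using qg_up[OF P, of s a] s t ab by auto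
      moreover have "dist ?z ?x \<le> \<bar>t - a\<bar>" using qg_lo[OF P, of t a] t by auto
      moreover have "\<bar>t - a\<bar> \<le> \<bar>s - a\<bar>" using s t by auto
      moreover have "dist ?z p \<le> dist ?z ?x + dist ?x p" by (rule dist_triangle)
      ultimately have "dist ?z p \<le> \<mu> * (2 * \<delta> + ec c) + \<nu> + c" using p by linarith
      then show ?thesis using p b2 by (meson order_trans)
    next
      case False
      have "dist ?x ?y \<le> dist ?x (\<pi> ?x) + dist (\<pi> ?x) (\<pi> ?z) + dist (\<pi> ?z) (\<pi> ?y) + dist (\<pi> ?y) ?y"
        using dist_triangle[of ?x ?y "\<pi> ?x"] dist_triangle[of "\<pi> ?x" ?y "\<pi> ?z"]
          dist_triangle[of "\<pi> ?z" ?y "\<pi> ?y"] by linarith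
      then have "dist ?x ?y \<le> 2 * ec c + 2 * \<delta>" using ex ey C2 False by (simp add: dist_commute)
      then have "\<bar>a - b\<bar> \<le> \<mu> * (2 * ec c + 2 * \<delta>) + \<nu>" using qg_up[OF P, of a b] t ab by auto
      moreover have "dist ?z ?x \<le> \<bar>t - a\<bar>" using qg_lo[OF P, of t a] t by auto
      moreover have "\<bar>t - a\<bar> \<le> \<bar>a - b\<bar>" using t by auto
      moreover have "dist ?z p \<le> dist ?z ?x + dist ?x p" by (rule dist_triangle)
      ultimately have "dist ?z p \<le> \<mu> * (2 * ec c + 2 * \<delta>) + \<nu> + c" using p by linarith
      then show ?thesis using p b3 by (meson order_trans)
    qed
  qed
qed


lemma ivt_aux:
  fixes f :: "nat \<Rightarrow> int"
  assumes "f 0 \<le> i" "J \<ge> 0" "\<forall>k<N. \<bar>f (Suc k) - f k\<bar> \<le> J"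
  shows "(\<exists>k\<le>N. \<bar>f k - i\<bar> \<le> J) \<or> (\<forall>k\<le>N. f k < i)"
  using assms(3)
proof (induction N)
  case 0
  then show ?case using assms(1,2) by (cases "f 0 = i") auto
next
  case (Suc N)
  then have IH: "(\<exists>k\<le>N. \<bar>f k - i\<bar> \<le> J) \<or> (\<forall>k\<le>N. f k < i)" by auto
  show ?case
  proof (cases "\<exists>k\<le>N. \<bar>f k - i\<bar> \<le> J")
    case True then show ?thesis by (meson le_Suc_eq)
  next
    case False
    then have all: "\<forall>k\<le>N. f k < i" using IH by blast
    show ?thesis
    proof (cases "f (Suc N) < i")
      case True then show ?thesis using all le_Suc_eq by auto
    next
      case False
      have "f (Suc N) \<le> f N + J" using Suc.prems by auto
      then have "\<bar>f (Suc N) - i\<bar> \<le> J" using False all by auto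
      then show ?thesis by blast
    qed
  qed
qed

lemma ivt:
  fixes f :: "nat \<Rightarrow> int"
  assumes "min (f 0) (f N) \<le> i" "i \<le> max (f 0) (f N)" "J \<ge> 0" "\<forall>k<N. \<bar>f (Suc k) - f k\<bar> \<le> J"
  shows "\<exists>k\<le>N. \<bar>f k - i\<bar> \<le> J"
proof (cases "f 0 \<le> f N")
  case True
  then have "f 0 \<le> i" "i \<le> f N" using assms by auto
  then show ?thesis using ivt_aux[of f i J N] assms by force
next
  case False
  let ?g = "\<lambda>k. - f k"
  have "?g 0 \<le> - i" "- i \<le> ?g N" using assms False by auto
  moreover have "\<forall>k<N. \<bar>?g (Suc k) - ?g k\<bar> \<le> J" using assms(4) by auto
  ultimately have "(\<exists>k\<le>N. \<bar>?g k - - i\<bar> \<le> J) \<or> (\<forall>k\<le>N. ?g k < - i)" using ivt_aux[of ?g "-i" J N] assms by blast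
  then show ?thesis using \<open>- i \<le> ?g N\<close> by force
qed

lemma DJ_bound: "\<exists>D. \<forall>m. \<bar>m\<bar> \<le> int J \<longrightarrow> dist x0 (orb m) \<le> D"
proof -
  let ?S = "(\<lambda>m. dist x0 (orb m)) ` {- int J..int J}"
  have "finite ?S" by simp
  then have "\<forall>m\<in>{- int J..int J}. dist x0 (orb m) \<le> Max ?S" by simp
  then show ?thesis by (intro exI[of _ "Max ?S"]) (auto simp: abs_le_iff)
qed

lemma idx_exists: assumes P: "(a, b, \<alpha>) \<in> \<Gamma>" "a \<le> b" "c \<ge> 0" "dist (\<alpha> a) (orb i1) \<le> c" "dist (\<alpha> b) (orb i2) \<le> c"
  and t: "t \<in> {a..b}"
  shows "\<exists>n. dist (\<alpha> t) (orb n) \<le> Qc c + \<delta>"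
proof -
  obtain z where z: "z \<in> A" "dist (\<alpha> t) z \<le> Qc c" using QC[OF P(1-3) orbA P(4) orbA P(5) t] by blast
  obtain n where "dist (orb n) z \<le> \<delta>" using orb_near z by blast
  then have "dist (\<alpha> t) (orb n) \<le> Qc c + \<delta>" using z dist_triangle[of "\<alpha> t" "orb n" z] by (simp add: dist_commute)
  then show ?thesis by blast
qed

lemma c_le_Qc: "c \<ge> 0 \<Longrightarrow> c \<le> Qc c"
  unfolding Qc_def using mu_ge1 nu_ge0 delta_ge0 ec_ge[of c] by (simp add: mult_nonneg_nonneg)

lemma LL: assumes c: "c \<ge> 0"
  shows "\<exists>R. \<forall>a b \<alpha> i1 i2 i. (a, b, \<alpha>) \<in> \<Gamma> \<and> a \<le> b \<and> dist (\<alpha> a) (orb i1) \<le> c \<and> dist (\<alpha> b) (orb i2) \<le> c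
     \<and> min i1 i2 \<le> i \<and> i \<le> max i1 i2 \<longrightarrow> (\<exists>t\<in>{a..b}. dist (\<alpha> t) (orb i) \<le> R)"
proof -
  define Q1 where "Q1 = Qc c + \<delta>"
  have cQ1: "c \<le> Q1" using c_le_Qc[OF c] delta_ge0 unfolding Q1_def by simp
  obtain J where J: "\<forall>n. dist x0 (orb n) \<le> 2 * Q1 + 1 \<longrightarrow> \<bar>n\<bar> \<le> int J" using orb_bound by blast
  obtain D where D: "\<forall>m. \<bar>m\<bar> \<le> int J \<longrightarrow> dist x0 (orb m) \<le> D" using DJ_bound by blast
  have "\<forall>a b \<alpha> i1 i2 i. (a, b, \<alpha>) \<in> \<Gamma> \<and> a \<le> b \<and> dist (\<alpha> a) (orb i1) \<le> c \<and> dist (\<alpha> b) (orb i2) \<le> c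
     \<and> min i1 i2 \<le> i \<and> i \<le> max i1 i2 \<longrightarrow> (\<exists>t\<in>{a..b}. dist (\<alpha> t) (orb i) \<le> Q1 + D)"
  proof (intro allI impI, elim conjE)
    fix a b \<alpha> i1 i2 i
    assume P: "(a, b, \<alpha>) \<in> \<Gamma>" "a \<le> b" "dist (\<alpha> a) (orb i1) \<le> c" "dist (\<alpha> b) (orb i2) \<le> c"
      and i: "min i1 i2 \<le> i" "i \<le> max i1 i2"
    define N where "N = Suc (nat \<lceil>b - a\<rceil>)"
    define s where "s k = min (a + real k) b" for k :: nat
    define f where "f k = (if k = 0 then i1 else if k = N then i2 else (SOME n. dist (\<alpha> (s k)) (orb n) \<le> Q1))" for k
    have s0: "s 0 = a" unfolding s_def using P by simp
    have sN: "s N = b" unfolding s_def N_def using P by (simp add: min_def) linarith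
    have sin: "s k \<in> {a..b}" for k unfolding s_def using P by auto
    have fclose: "dist (\<alpha> (s k)) (orb (f k)) \<le> Q1" for k
    proof (cases "k = 0")
      case True then show ?thesis using s0 P cQ1 unfolding f_def by simp
    next
      case k0: False
      show ?thesis
      proof (cases "k = N")
        case True then show ?thesis using sN P cQ1 k0 unfolding f_def by simp
      next
        case False
        have "\<exists>n. dist (\<alpha> (s k)) (orb n) \<le> Q1" using idx_exists[OF P(1,2) c P(3,4) sin] unfolding Q1_def .
        then have "dist (\<alpha> (s k)) (orb (SOME n. dist (\<alpha> (s k)) (orb n) \<le> Q1)) \<le> Q1" by (rule someI_ex)
        then show ?thesis using k0 False unfolding f_def by simp
      qed
    qed
    have f0: "f 0 = i1" unfolding f_def by simp
    have fN: "f N = i2" unfolding f_def N_def by simp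
    have step: "\<bar>f (Suc k) - f k\<bar> \<le> int J" for k
    proof -
      have "\<bar>s (Suc k) - s k\<bar> \<le> 1" unfolding s_def by (auto simp: min_def)
      then have "dist (\<alpha> (s (Suc k))) (\<alpha> (s k)) \<le> 1" using qg_lo[OF P(1) sin sin] by (meson order_trans)
      then have "dist (orb (f k)) (orb (f (Suc k))) \<le> 2 * Q1 + 1"
        using fclose[of k] fclose[of "Suc k"] dist_triangle[of "orb (f k)" "orb (f (Suc k))" "\<alpha> (s k)"]
          dist_triangle[of "\<alpha> (s k)" "orb (f (Suc k))" "\<alpha> (s (Suc k))"] by (simp add: dist_commute)
      then have "\<bar>f (Suc k) - f k\<bar> \<le> int J" using J orb_dist by metis
      then show ?thesis .
    qed
    have J0: "int J \<ge> 0" by simp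
    obtain k where k: "k \<le> N" "\<bar>f k - i\<bar> \<le> int J" using ivt[of f N i "int J"] f0 fN i step J0 by auto
    have "dist (orb (f k)) (orb i) \<le> D" using D k(2) orb_dist[of "f k" i] by (simp add: abs_minus_commute)
    then have "dist (\<alpha> (s k)) (orb i) \<le> Q1 + D" using fclose[of k] dist_triangle[of "\<alpha> (s k)" "orb i" "orb (f k)"] by linarith
    then show "\<exists>t\<in>{a..b}. dist (\<alpha> t) (orb i) \<le> Q1 + D" using sin by blast
  qed
  then show ?thesis by blast
qed


abbreviation "EE \<equiv> elem_closure G \<phi> A"

lemma orb0: "orb 0 = x0" unfolding orb_def using act_one by simp

lemma E_def2: "u \<in> EE \<longleftrightarrow> u \<in> carrier G \<and> (\<exists>r. (\<forall>a\<in>A. \<exists>b\<in>A. dist (\<phi> u a) b \<le> r) \<and> (\<forall>b\<in>A. \<exists>a\<in>A. dist b (\<phi> u a) \<le> r))"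
  unfolding elem_closure_def by auto

lemma E_gpow: "g [^] (n::int) \<in> EE"
proof -
  have "\<forall>a\<in>A. \<exists>b\<in>A. dist (\<phi> (g [^] n) a) b \<le> 0" using A_inv[of n] by auto
  moreover have "\<forall>b\<in>A. \<exists>a\<in>A. dist b (\<phi> (g [^] n) a) \<le> 0" using A_inv[of n] by (metis dist_self imageE order_refl)
  ultimately show ?thesis unfolding E_def2 using g_carrier by blast
qed

lemma E_mult: assumes "u \<in> EE" "v \<in> EE" shows "u \<otimes> v \<in> EE"
proof -
  obtain ru where ru: "u \<in> carrier G" "\<forall>a\<in>A. \<exists>b\<in>A. dist (\<phi> u a) b \<le> ru" "\<forall>b\<in>A. \<exists>a\<in>A. dist b (\<phi> u a) \<le> ru"
    using assms(1) unfolding E_def2 by blast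
  obtain rv where rv: "v \<in> carrier G" "\<forall>a\<in>A. \<exists>b\<in>A. dist (\<phi> v a) b \<le> rv" "\<forall>b\<in>A. \<exists>a\<in>A. dist b (\<phi> v a) \<le> rv"
    using assms(2) unfolding E_def2 by blast
  have "\<forall>a\<in>A. \<exists>c\<in>A. dist (\<phi> (u \<otimes> v) a) c \<le> rv + ru"
  proof
    fix a assume a: "a \<in> A"
    obtain b where b: "b \<in> A" "dist (\<phi> v a) b \<le> rv" using rv a by blast
    obtain c where c: "c \<in> A" "dist (\<phi> u b) c \<le> ru" using ru b by blast
    have "dist (\<phi> u (\<phi> v a)) (\<phi> u b) \<le> rv" using iso[OF ru(1)] b by simp
    then have "dist (\<phi> u (\<phi> v a)) c \<le> rv + ru" using c dist_triangle[of "\<phi> u (\<phi> v a)" c "\<phi> u b"] by linarith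
    then show "\<exists>c\<in>A. dist (\<phi> (u \<otimes> v) a) c \<le> rv + ru" using c act_mult[OF ru(1) rv(1)] by auto
  qed
  moreover have "\<forall>c\<in>A. \<exists>a\<in>A. dist c (\<phi> (u \<otimes> v) a) \<le> rv + ru"
  proof
    fix c assume c: "c \<in> A"
    obtain b where b: "b \<in> A" "dist c (\<phi> u b) \<le> ru" using ru c by blast
    obtain a where a: "a \<in> A" "dist b (\<phi> v a) \<le> rv" using rv b by blast
    have "dist (\<phi> u b) (\<phi> u (\<phi> v a)) \<le> rv" using iso[OF ru(1)] a by simp
    then have "dist c (\<phi> u (\<phi> v a)) \<le> rv + ru" using b dist_triangle[of c "\<phi> u (\<phi> v a)" "\<phi> u b"] by linarith
    then show "\<exists>a\<in>A. dist c (\<phi> (u \<otimes> v) a) \<le> rv + ru" using a act_mult[OF ru(1) rv(1)] by auto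
  qed
  ultimately show ?thesis unfolding E_def2 using ru(1) rv(1) by blast
qed

lemma E_inv: assumes "u \<in> EE" shows "inv u \<in> EE"
proof -
  obtain r where r: "u \<in> carrier G" "\<forall>a\<in>A. \<exists>b\<in>A. dist (\<phi> u a) b \<le> r" "\<forall>b\<in>A. \<exists>a\<in>A. dist b (\<phi> u a) \<le> r"
    using assms unfolding E_def2 by blast
  have "\<forall>a\<in>A. \<exists>b\<in>A. dist (\<phi> (inv u) a) b \<le> r"
  proof
    fix a assume "a \<in> A"
    then obtain a' where a': "a' \<in> A" "dist a (\<phi> u a') \<le> r" using r by blast
    have "dist (\<phi> (inv u) a) a' = dist (\<phi> (inv u) a) (\<phi> (inv u) (\<phi> u a'))" using act_inv1[OF r(1)] by simp
    also have "\<dots> = dist a (\<phi> u a')" using iso r(1) by simp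
    finally have "dist (\<phi> (inv u) a) a' \<le> r" using a' by linarith
    then show "\<exists>b\<in>A. dist (\<phi> (inv u) a) b \<le> r" using a' by blast
  qed
  moreover have "\<forall>b\<in>A. \<exists>a\<in>A. dist b (\<phi> (inv u) a) \<le> r"
  proof
    fix b assume "b \<in> A"
    then obtain b' where b': "b' \<in> A" "dist (\<phi> u b) b' \<le> r" using r by blast
    have "dist b (\<phi> (inv u) b') = dist (\<phi> (inv u) (\<phi> u b)) (\<phi> (inv u) b')" using act_inv1[OF r(1)] by simp
    also have "\<dots> = dist (\<phi> u b) b'" using iso r(1) by simp
    finally have "dist b (\<phi> (inv u) b') \<le> r" using b' by linarith
    then show "\<exists>a\<in>A. dist b (\<phi> (inv u) a) \<le> r" using b' by blast
  qed
  ultimately show ?thesis unfolding E_def2 using r(1) by blast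
qed

lemma E_sub: "subgroup EE G"
proof
  show "EE \<subseteq> carrier G" unfolding elem_closure_def by auto
  show "\<one> \<in> EE" using E_gpow[of 0] by simp
qed (auto intro: E_mult E_inv)

lemma stepA: "\<exists>R0. \<forall>u\<in>EE. \<exists>z\<in>A. dist (\<phi> u x0) z \<le> R0"
proof -
  obtain R1 where R1: "\<forall>a b \<alpha> i1 i2 i. (a, b, \<alpha>) \<in> \<Gamma> \<and> a \<le> b \<and> dist (\<alpha> a) (orb i1) \<le> 0 \<and> dist (\<alpha> b) (orb i2) \<le> 0
     \<and> min i1 i2 \<le> i \<and> i \<le> max i1 i2 \<longrightarrow> (\<exists>t\<in>{a..b}. dist (\<alpha> t) (orb i) \<le> R1)" using LL[of 0] by auto
  have "\<forall>u\<in>EE. \<exists>z\<in>A. dist (\<phi> u x0) z \<le> R1 + (2 * \<mu> * \<delta> + \<nu> + \<delta>)"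
  proof
    fix u assume u: "u \<in> EE"
    obtain r where r: "u \<in> carrier G" "\<forall>a\<in>A. \<exists>b\<in>A. dist (\<phi> u a) b \<le> r" using u unfolding E_def2 by blast
    define w where "w = \<pi> (\<phi> u x0)"
    define K where "K = \<delta> + ec r + Lip R1 + dist w (\<phi> u x0)"
    obtain N where N: "\<forall>n. \<bar>n\<bar> \<ge> int N \<longrightarrow> dist x0 (orb n) > K" using orb_far by blast
    have farP: "dist (\<pi> (\<phi> u (orb n))) (\<pi> z) > \<delta>" if n: "\<bar>n\<bar> \<ge> int N" and z: "dist z (\<phi> u x0) \<le> R1" for n z
    proof -
      obtain b where b: "b \<in> A" "dist (\<phi> u (orb n)) b \<le> r" using r orbA by blast
      have e1: "dist (\<phi> u (orb n)) (\<pi> (\<phi> u (orb n))) \<le> ec r" using near_pi b by blast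
      have e2: "dist (\<pi> z) w \<le> Lip R1" unfolding w_def using pi_lip[of z "\<phi> u x0"] Lip_mono[OF z] by linarith
      have e3: "dist (\<phi> u (orb n)) (\<phi> u x0) > K" using N n iso[OF r(1)] by (simp add: dist_commute)
      have "dist (\<phi> u (orb n)) (\<phi> u x0) \<le> dist (\<phi> u (orb n)) (\<pi> (\<phi> u (orb n))) + dist (\<pi> (\<phi> u (orb n))) (\<pi> z) + dist (\<pi> z) w + dist w (\<phi> u x0)"
        using dist_triangle[of "\<phi> u (orb n)" "\<phi> u x0" "\<pi> (\<phi> u (orb n))"]
          dist_triangle[of "\<pi> (\<phi> u (orb n))" "\<phi> u x0" "\<pi> z"] dist_triangle[of "\<pi> z" "\<phi> u x0" w] by linarith
      then show ?thesis using e1 e2 e3 unfolding K_def by linarith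
    qed
    obtain a b \<beta> where P: "(a, b, \<beta>) \<in> \<Gamma>" "\<beta> a = orb (- int N)" "\<beta> b = orb (int N)" "a \<le> b"
      using path_exists by blast
    have "\<exists>t\<in>{a..b}. dist (\<beta> t) (orb 0) \<le> R1"
      by (rule R1[rule_format, of a b \<beta> "- int N" "int N" 0]) (simp add: P)
    then obtain t where t: "t \<in> {a..b}" "dist (\<beta> t) (orb 0) \<le> R1" by blast
    let ?z = "\<phi> u (\<beta> t)"
    have zc: "dist ?z (\<phi> u x0) \<le> R1" using t iso[OF r(1)] orb0 by simp
    have P': "(a, b, \<phi> u \<circ> \<beta>) \<in> \<Gamma>" using path_trans[OF r(1) P(1)] .
    have d1: "dist (\<pi> ((\<phi> u \<circ> \<beta>) a)) (\<pi> ((\<phi> u \<circ> \<beta>) t)) > \<delta>" using farP[of "- int N" ?z] zc P(2) by simp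
    have d2: "dist (\<pi> ((\<phi> u \<circ> \<beta>) t)) (\<pi> ((\<phi> u \<circ> \<beta>) b)) > \<delta>" using farP[of "int N" ?z] zc P(3) by (simp add: dist_commute)
    have "dist ?z (\<pi> ?z) \<le> 2 * \<mu> * \<delta> + \<nu> + \<delta>" using mid[OF P' _ _ d1 d2] t by simp
    then have "dist (\<phi> u x0) (\<pi> ?z) \<le> R1 + (2 * \<mu> * \<delta> + \<nu> + \<delta>)"
      using zc dist_triangle[of "\<phi> u x0" "\<pi> ?z" ?z] by (simp add: dist_commute)
    then show "\<exists>z\<in>A. dist (\<phi> u x0) z \<le> R1 + (2 * \<mu> * \<delta> + \<nu> + \<delta>)" using pi_in by blast
  qed
  then show ?thesis by blast
qed


lemma E_near: "\<exists>R2\<ge>0. \<forall>u\<in>EE. (\<forall>a\<in>A. \<exists>b\<in>A. dist (\<phi> u a) b \<le> R2) \<and> (\<forall>a\<in>A. \<exists>b\<in>A. dist a (\<phi> u b) \<le> R2)"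
proof -
  obtain R0 where R0: "\<forall>u\<in>EE. \<exists>z\<in>A. dist (\<phi> u x0) z \<le> R0" using stepA by blast
  have half: "\<exists>b\<in>A. dist (\<phi> u a) b \<le> R0 + \<delta>" if u: "u \<in> EE" and a: "a \<in> A" for u a
  proof -
    obtain n where n: "dist (orb n) a \<le> \<delta>" using orb_near a by blast
    have uc: "u \<in> carrier G" using u E_sub subgroup.subset by blast
    have "u \<otimes> g [^] n \<in> EE" using E_mult[OF u E_gpow] .
    then obtain z where z: "z \<in> A" "dist (\<phi> (u \<otimes> g [^] n) x0) z \<le> R0" using R0 by blast
    have "\<phi> (u \<otimes> g [^] n) x0 = \<phi> u (orb n)" unfolding orb_def using act_mult uc g_carrier by simp
    moreover have "dist (\<phi> u a) (\<phi> u (orb n)) \<le> \<delta>" using iso[OF uc] n by (simp add: dist_commute)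
    ultimately have "dist (\<phi> u a) z \<le> R0 + \<delta>" using z dist_triangle[of "\<phi> u a" z "\<phi> u (orb n)"] by simp
    then show ?thesis using z by blast
  qed
  have R0pos: "R0 \<ge> 0" using R0 E_gpow[of 0] by (meson order_trans zero_le_dist)
  have "\<forall>u\<in>EE. (\<forall>a\<in>A. \<exists>b\<in>A. dist (\<phi> u a) b \<le> R0 + \<delta>) \<and> (\<forall>a\<in>A. \<exists>b\<in>A. dist a (\<phi> u b) \<le> R0 + \<delta>)"
  proof (intro ballI conjI)
    fix u a assume u: "u \<in> EE" and a: "a \<in> A"
    show "\<exists>b\<in>A. dist (\<phi> u a) b \<le> R0 + \<delta>" using half u a by blast
    obtain b where b: "b \<in> A" "dist (\<phi> (inv u) a) b \<le> R0 + \<delta>" using half[OF E_inv[OF u] a] by blast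
    have uc: "u \<in> carrier G" using u E_sub subgroup.subset by blast
    have "dist a (\<phi> u b) = dist (\<phi> (inv u) a) b"
      using iso[OF uc, of "\<phi> (inv u) a" b] act_inv2[OF uc] by simp
    then have "dist a (\<phi> u b) \<le> R0 + \<delta>" using b by linarith
    then show "\<exists>b\<in>A. dist a (\<phi> u b) \<le> R0 + \<delta>" using b by blast
  qed
  then show ?thesis using R0pos delta_ge0 by (intro exI[of _ "R0 + \<delta>"]) auto
qed

lemma ec_mono: "c \<le> c' \<Longrightarrow> ec c \<le> ec c'" unfolding ec_def using Lip_mono by fastforce

lemma lemU: "\<exists>C1. \<forall>u\<in>EE. \<forall>x. dist (\<pi> (\<phi> u x)) (\<phi> u (\<pi> x)) \<le> C1"
proof -
  obtain R2 where R2: "R2 \<ge> 0" "\<forall>u\<in>EE. (\<forall>a\<in>A. \<exists>b\<in>A. dist (\<phi> u a) b \<le> R2) \<and> (\<forall>a\<in>A. \<exists>b\<in>A. dist a (\<phi> u b) \<le> R2)"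
    using E_near by blast
  define c' where "c' = 2 * \<delta> + R2"
  have c'0: "c' \<ge> 0" unfolding c'_def using R2 delta_ge0 by simp
  obtain R where R: "\<forall>a b \<alpha> i1 i2 i. (a, b, \<alpha>) \<in> \<Gamma> \<and> a \<le> b \<and> dist (\<alpha> a) (orb i1) \<le> c' \<and> dist (\<alpha> b) (orb i2) \<le> c'
     \<and> min i1 i2 \<le> i \<and> i \<le> max i1 i2 \<longrightarrow> (\<exists>t\<in>{a..b}. dist (\<alpha> t) (orb i) \<le> R)" using LL[OF c'0] by blast
  define K1 where "K1 = 2 * \<delta> + R2 + ec R2"
  obtain N where N: "\<forall>n. \<bar>n\<bar> \<ge> int N \<longrightarrow> dist x0 (orb n) > K1" using orb_far by blast
  define Dthr where "Dthr = Lip (\<delta> + R2) + 2 * \<delta>"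
  define D2 where "D2 = \<mu> * (2 * \<delta> + R) + \<nu> + 2 * \<delta> + R2"
  have "\<forall>u\<in>EE. \<forall>x. dist (\<pi> (\<phi> u x)) (\<phi> u (\<pi> x)) \<le> max Dthr D2 + R2"
  proof (intro ballI allI)
    fix u x assume u: "u \<in> EE"
    have uc: "u \<in> carrier G" using u E_sub subgroup.subset by blast
    define \<pi>' where "\<pi>' y = \<phi> u (\<pi> (\<phi> (inv u) y))" for y
    define x' where "x' = \<phi> u x"
    define a where "a = \<pi> x'"
    define b where "b = \<phi> u (\<pi> x)"
    have b': "\<pi>' x' = b" unfolding \<pi>'_def x'_def b_def using act_inv1[OF uc] by simp
    obtain bs where bs: "bs \<in> A" "dist b bs \<le> R2" using R2(2) u pi_in unfolding b_def by blast
    have aA: "a \<in> A" unfolding a_def by (rule pi_in)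
    obtain i where i: "dist (orb i) a \<le> \<delta>" using orb_near aA by blast
    obtain j where j: "dist (orb j) bs \<le> \<delta>" using orb_near bs by blast
    define k where "k = (if i \<le> j then i - int N else i + int N)"
    have kij: "min j k \<le> i" "i \<le> max j k" "\<bar>k - j\<bar> \<ge> int N" unfolding k_def by auto
    let ?p = "orb k"
    have P1: "dist (\<pi>' p) p \<le> ec R2" if p: "p \<in> A" for p
    proof -
      obtain b1 where b1: "b1 \<in> A" "dist p (\<phi> u b1) \<le> R2" using R2(2) u p by blast
      have "dist (\<phi> (inv u) p) b1 \<le> R2" using b1 iso[OF uc, of "\<phi> (inv u) p" b1] act_inv2[OF uc] by simp
      then have "dist (\<phi> (inv u) p) (\<pi> (\<phi> (inv u) p)) \<le> ec R2" using near_pi b1 by blast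
      then show ?thesis unfolding \<pi>'_def using iso[OF uc, of "\<phi> (inv u) p"] act_inv2[OF uc] by (simp add: dist_commute)
    qed
    have CS2': "\<exists>t\<in>{s0..s1}. dist (\<alpha> t) (\<pi>' (\<alpha> s0)) \<le> \<delta>"
      if Pa: "(s0, s1, \<alpha>) \<in> \<Gamma>" "s0 \<le> s1" "dist (\<pi>' (\<alpha> s0)) (\<pi>' (\<alpha> s1)) > \<delta>" for s0 s1 \<alpha>
    proof -
      have ic: "inv u \<in> carrier G" using uc by simp
      have T: "(s0, s1, \<phi> (inv u) \<circ> \<alpha>) \<in> \<Gamma>" using path_trans[OF ic Pa(1)] .
      have "dist (\<pi> ((\<phi> (inv u) \<circ> \<alpha>) s0)) (\<pi> ((\<phi> (inv u) \<circ> \<alpha>) s1)) > \<delta>"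
        using Pa(3) iso[OF uc] unfolding \<pi>'_def by simp
      then obtain t where t: "t \<in> {s0..s1}" "dist ((\<phi> (inv u) \<circ> \<alpha>) t) (\<pi> ((\<phi> (inv u) \<circ> \<alpha>) s0)) \<le> \<delta>"
        using cs2[OF T Pa(2)] by blast
      have "dist (\<alpha> t) (\<pi>' (\<alpha> s0)) = dist ((\<phi> (inv u) \<circ> \<alpha>) t) (\<pi> ((\<phi> (inv u) \<circ> \<alpha>) s0))"
        unfolding \<pi>'_def using iso[OF uc, of "\<phi> (inv u) (\<alpha> t)"] act_inv2[OF uc] by simp
      then have "dist (\<alpha> t) (\<pi>' (\<alpha> s0)) \<le> \<delta>" using t by linarith
      then show ?thesis using t(1) by blast
    qed
    define D where "D = dist a bs"
    have Dbound: "D \<le> max Dthr D2"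
    proof (rule ccontr)
      assume "\<not> D \<le> max Dthr D2"
      then have DD: "D > Dthr" "D > D2" by auto
      obtain s0 s1 \<alpha> where P: "(s0, s1, \<alpha>) \<in> \<Gamma>" "\<alpha> s0 = x'" "\<alpha> s1 = ?p" "s0 \<le> s1" using path_exists by blast
      have jk: "dist (orb j) ?p > K1" using N kij(3) orb_dist[of j k] by simp
      have "dist b ?p \<le> dist b bs + dist bs (orb j) + dist (orb j) ?p"
        using dist_triangle[of b ?p bs] dist_triangle[of bs ?p "orb j"] by linarith
      have "dist (orb j) ?p \<le> dist (orb j) bs + dist bs b + dist b (\<pi>' ?p) + dist (\<pi>' ?p) ?p"
        using dist_triangle[of "orb j" ?p bs] dist_triangle[of bs ?p b] dist_triangle[of b ?p "\<pi>' ?p"] by linarith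
      then have "dist b (\<pi>' ?p) > \<delta>" using jk j bs P1[OF orbA, of k] unfolding K1_def by (simp add: dist_commute)
      then have "dist (\<pi>' (\<alpha> s0)) (\<pi>' (\<alpha> s1)) > \<delta>" using P b' by simp
      then obtain s' where s': "s' \<in> {s0..s1}" "dist (\<alpha> s') b \<le> \<delta>" using CS2'[OF P(1,4)] P b' by auto
      have s'bs: "dist (\<alpha> s') bs \<le> \<delta> + R2" using s' bs dist_triangle[of "\<alpha> s'" bs b] by linarith
      have s'j: "dist (\<alpha> s') (orb j) \<le> c'" unfolding c'_def
        using s'bs j dist_triangle[of "\<alpha> s'" "orb j" bs] by (simp add: dist_commute)
      have Pa: "(s0, s', \<alpha>) \<in> \<Gamma>" using path_sub[OF P(1)] s' by auto
      have "dist (\<pi> (\<alpha> s')) (\<pi> bs) \<le> Lip (\<delta> + R2)" using pi_lip[of "\<alpha> s'" bs] Lip_mono[OF s'bs] by linarith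
      moreover have "dist (\<pi> bs) bs \<le> \<delta>" using pi_near bs by (simp add: dist_commute)
      moreover have "D \<le> dist a (\<pi> (\<alpha> s')) + dist (\<pi> (\<alpha> s')) (\<pi> bs) + dist (\<pi> bs) bs"
        unfolding D_def using dist_triangle[of a bs "\<pi> (\<alpha> s')"] dist_triangle[of "\<pi> (\<alpha> s')" bs "\<pi> bs"] by linarith
      ultimately have "dist (\<pi> (\<alpha> s0)) (\<pi> (\<alpha> s')) > \<delta>" using DD(1) P(2) unfolding Dthr_def a_def by simp
      then obtain s0' where s0': "s0' \<in> {s0..s'}" "dist (\<alpha> s0') (\<pi> (\<alpha> s0)) \<le> \<delta>" using cs2[OF Pa] s' by auto
      have s0'i: "dist (\<alpha> s0') (orb i) \<le> 2 * \<delta>" using s0' i P(2) dist_triangle[of "\<alpha> s0'" "orb i" a]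
        unfolding a_def by (simp add: dist_commute)
      have Pb: "(s', s1, \<alpha>) \<in> \<Gamma>" using path_sub[OF P(1)] s' by auto
      have "\<exists>t\<in>{s'..s1}. dist (\<alpha> t) (orb i) \<le> R"
        by (rule R[rule_format, of s' s1 \<alpha> j k i]) (use Pb s' s'j P(3) c'0 kij in auto)
      then obtain s'' where s'': "s'' \<in> {s'..s1}" "dist (\<alpha> s'') (orb i) \<le> R" by blast
      have "dist (\<alpha> s0') (\<alpha> s'') \<le> 2 * \<delta> + R" using s0'i s'' dist_triangle[of "\<alpha> s0'" "\<alpha> s''" "orb i"]
        by (simp add: dist_commute)
      then have "\<bar>s0' - s''\<bar> \<le> \<mu> * (2 * \<delta> + R) + \<nu>" using qg_up[OF P(1), of s0' s''] s0' s' s'' by auto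
      moreover have "dist (\<alpha> s0') (\<alpha> s') \<le> \<bar>s0' - s'\<bar>" using qg_lo[OF P(1), of s0' s'] s0' s' by auto
      moreover have "\<bar>s0' - s'\<bar> \<le> \<bar>s0' - s''\<bar>" using s0' s' s'' by auto
      moreover have "D \<le> dist a (\<alpha> s0') + dist (\<alpha> s0') (\<alpha> s') + dist (\<alpha> s') bs"
        unfolding D_def using dist_triangle[of a bs "\<alpha> s0'"] dist_triangle[of "\<alpha> s0'" bs "\<alpha> s'"] by linarith
      moreover have "dist a (\<alpha> s0') \<le> \<delta>" using s0' P(2) unfolding a_def by (simp add: dist_commute)
      ultimately have "D \<le> D2" using s'bs unfolding D2_def by linarith
      then show False using DD by simp
    qed
    have "dist a b \<le> D + R2" unfolding D_def using bs dist_triangle[of a b bs] by (simp add: dist_commute)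
    then show "dist (\<pi> (\<phi> u x)) (\<phi> u (\<pi> x)) \<le> max Dthr D2 + R2" using Dbound unfolding a_def x'_def b_def by linarith
  qed
  then show ?thesis by blast
qed


lemma canc1 [simp]: "x \<in> carrier G \<Longrightarrow> y \<in> carrier G \<Longrightarrow> x \<otimes> inv y \<otimes> y = x"
  by (simp add: m_assoc)
lemma canc2 [simp]: "x \<in> carrier G \<Longrightarrow> y \<in> carrier G \<Longrightarrow> x \<otimes> y \<otimes> inv y = x"
  by (simp add: m_assoc)

lemma conj_hom: assumes k: "k \<in> carrier G" shows "group_hom G G (\<lambda>z. k \<otimes> z \<otimes> inv k)"
proof -
  have "(\<lambda>z. k \<otimes> z \<otimes> inv k) \<in> hom G G"
  proof (rule homI)
    fix x assume "x \<in> carrier G" then show "k \<otimes> x \<otimes> inv k \<in> carrier G" using k by simp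
  next
    fix x y assume xy: "x \<in> carrier G" "y \<in> carrier G"
    show "k \<otimes> (x \<otimes> y) \<otimes> inv k = k \<otimes> x \<otimes> inv k \<otimes> (k \<otimes> y \<otimes> inv k)" using k xy by (simp add: m_assoc[symmetric])
  qed
  then show ?thesis unfolding group_hom_def group_hom_axioms_def using grp by simp
qed

lemma conj_pow: "k \<in> carrier G \<Longrightarrow> y \<in> carrier G \<Longrightarrow> k \<otimes> y [^] (n::int) \<otimes> inv k = (k \<otimes> y \<otimes> inv k) [^] n"
  using group_hom.hom_int_pow[OF conj_hom] by blast

lemma stepB: "\<exists>F. finite F \<and> F \<subseteq> carrier G \<and> (\<forall>u\<in>EE. \<exists>n::int. inv (g [^] n) \<otimes> u \<in> F)"
proof -
  obtain R0 where R0: "\<forall>u\<in>EE. \<exists>z\<in>A. dist (\<phi> u x0) z \<le> R0" using stepA by blast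
  let ?F = "{h \<in> carrier G. dist x0 (\<phi> h x0) \<le> R0 + \<delta>}"
  have "\<forall>u\<in>EE. \<exists>n::int. inv (g [^] n) \<otimes> u \<in> ?F"
  proof
    fix u assume u: "u \<in> EE"
    have uc: "u \<in> carrier G" using u E_sub subgroup.subset by blast
    obtain z where z: "z \<in> A" "dist (\<phi> u x0) z \<le> R0" using R0 u by blast
    obtain n where n: "dist (orb n) z \<le> \<delta>" using orb_near z by blast
    have "dist x0 (\<phi> (inv (g [^] n) \<otimes> u) x0) = dist (\<phi> (g [^] n) x0) (\<phi> (g [^] n) (\<phi> (inv (g [^] n)) (\<phi> u x0)))"
      using iso g_carrier act_mult uc by simp
    also have "\<dots> = dist (orb n) (\<phi> u x0)" unfolding orb_def using act_inv2 g_carrier by simp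
    also have "\<dots> \<le> R0 + \<delta>" using z n dist_triangle[of "orb n" "\<phi> u x0" z] by (simp add: dist_commute)
    finally show "\<exists>n::int. inv (g [^] n) \<otimes> u \<in> ?F" using uc g_carrier by blast
  qed
  moreover have "finite ?F" by (rule fin_disp_set)
  ultimately show ?thesis by blast
qed

lemma KF_pre: assumes k: "k \<in> EE"
  shows "\<exists>m::nat. m > 0 \<and> (\<exists>a::int. k \<otimes> g [^] (int m) \<otimes> inv k = g [^] a)"
proof -
  obtain F where F: "finite F" "F \<subseteq> carrier G" "\<forall>u\<in>EE. \<exists>n::int. inv (g [^] n) \<otimes> u \<in> F" using stepB by blast
  have kc: "k \<in> carrier G" using k E_sub subgroup.subset by blast
  define c where "c n = k \<otimes> g [^] (int n) \<otimes> inv k" for n :: nat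
  have cE: "c n \<in> EE" for n unfolding c_def using E_mult E_inv E_gpow k by blast
  define a where "a n = (SOME a::int. inv (g [^] a) \<otimes> c n \<in> F)" for n
  have aF: "inv (g [^] a n) \<otimes> c n \<in> F" for n unfolding a_def using F(3) cE someI_ex by metis
  define f where "f n = inv (g [^] a n) \<otimes> c n" for n
  have "\<not> inj f"
  proof
    assume "inj f"
    then have "infinite (range f)" using finite_imageD by blast
    moreover have "range f \<subseteq> F" using aF unfolding f_def by auto
    ultimately show False using F(1) finite_subset by blast
  qed
  then obtain n1 n2 where nn: "f n1 = f n2" "n1 \<noteq> n2" unfolding inj_def by blast
  have gen: "\<exists>m::nat. m > 0 \<and> (\<exists>a::int. k \<otimes> g [^] (int m) \<otimes> inv k = g [^] a)"
    if fe: "f p = f q" and pq: "p < q" for p q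
  proof -
    have ccar: "c n \<in> carrier G" for n unfolding c_def using kc g_carrier by simp
    have cn: "c n = g [^] a n \<otimes> f n" for n unfolding f_def using ccar g_carrier
      by (simp add: m_assoc[symmetric])
    have fcar: "f n \<in> carrier G" for n unfolding f_def using ccar g_carrier by simp
    have "c q \<otimes> inv (c p) = g [^] a q \<otimes> inv (g [^] a p)"
      using cn[of q] cn[of p] fe fcar g_carrier by (simp add: inv_mult_group m_assoc[symmetric])
    also have "\<dots> = g [^] (a q - a p)" using int_pow_diff g_carrier by simp
    finally have e1: "c q \<otimes> inv (c p) = g [^] (a q - a p)" .
    interpret H: group_hom G G "\<lambda>z. k \<otimes> z \<otimes> inv k" by (rule conj_hom[OF kc])
    have "c q \<otimes> inv (c p) = k \<otimes> (g [^] (int q) \<otimes> inv (g [^] (int p))) \<otimes> inv k"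
      unfolding c_def using H.hom_mult[of "g [^] (int q)" "inv (g [^] (int p))"] H.hom_inv[of "g [^] (int p)"] g_carrier
      by simp
    also have "\<dots> = k \<otimes> g [^] (int (q - p)) \<otimes> inv k" using int_pow_diff[OF g_carrier, of "int q" "int p"] pq
      by (simp add: of_nat_diff)
    finally have "k \<otimes> g [^] (int (q - p)) \<otimes> inv k = g [^] (a q - a p)" using e1 by simp
    then show ?thesis using pq by (intro exI[of _ "q - p"]) auto
  qed
  show ?thesis
  proof (cases "n1 < n2")
    case True then show ?thesis using gen nn by blast
  next
    case False then have "n2 < n1" using nn by simp
    then show ?thesis using gen nn by metis
  qed
qed


lemma iter_conj: assumes kc: "k \<in> carrier G" and e: "k \<otimes> g [^] (m::int) \<otimes> inv k = g [^] (a::int)"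
  shows "k [^] (j::nat) \<otimes> g [^] (m ^ j) \<otimes> inv (k [^] j) = g [^] (a ^ j)"
proof (induction j)
  case 0 then show ?case using g_carrier by simp
next
  case (Suc j)
  have kj: "k [^] j \<in> carrier G" using kc by simp
  have gm: "g [^] (m ^ j) \<in> carrier G" using g_carrier by simp
  have "k \<otimes> g [^] (m ^ Suc j) \<otimes> inv k = k \<otimes> (g [^] m) [^] (m ^ j) \<otimes> inv k"
    using int_pow_pow[OF g_carrier, of m "m ^ j"] by simp
  also have "\<dots> = (g [^] a) [^] (m ^ j)" using conj_pow[OF kc, of "g [^] m" "m ^ j"] e g_carrier by simp
  also have "\<dots> = (g [^] (m ^ j)) [^] a" using int_pow_pow[OF g_carrier] by (simp add: mult.commute)
  finally have inner: "k \<otimes> g [^] (m ^ Suc j) \<otimes> inv k = (g [^] (m ^ j)) [^] a" .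
  have "k [^] Suc j \<otimes> g [^] (m ^ Suc j) \<otimes> inv (k [^] Suc j)
        = k [^] j \<otimes> (k \<otimes> g [^] (m ^ Suc j) \<otimes> inv k) \<otimes> inv (k [^] j)"
    using kc kj g_carrier by (simp add: inv_mult_group m_assoc)
  also have "\<dots> = k [^] j \<otimes> (g [^] (m ^ j)) [^] a \<otimes> inv (k [^] j)" using inner by simp
  also have "\<dots> = (k [^] j \<otimes> g [^] (m ^ j) \<otimes> inv (k [^] j)) [^] a" using conj_pow[OF kj gm] by simp
  also have "\<dots> = (g [^] (a ^ j)) [^] a" using Suc by simp
  also have "\<dots> = g [^] (a ^ Suc j)" using int_pow_pow[OF g_carrier] by (simp add: mult.commute)
  finally show ?case .
qed

lemma KF: assumes k: "k \<in> EE" and o: "q > 0" "k [^] (q::nat) = \<one>"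
  shows "\<exists>m::nat. m > 0 \<and> (k \<otimes> g [^] (int m) \<otimes> inv k = g [^] (int m) \<or> k \<otimes> g [^] (int m) \<otimes> inv k = g [^] (- int m))"
proof -
  have kc: "k \<in> carrier G" using k E_sub subgroup.subset by blast
  obtain m a where ma: "m > 0" "k \<otimes> g [^] (int m) \<otimes> inv k = g [^] (a::int)" using KF_pre[OF k] by blast
  have "k [^] q \<otimes> g [^] (int m ^ q) \<otimes> inv (k [^] q) = g [^] (a ^ q)" by (rule iter_conj[OF kc ma(2)])
  then have "g [^] (int m ^ q) = g [^] (a ^ q)" using o g_carrier by simp
  then have "int m ^ q = a ^ q" by (rule gpow_inj)
  then have "\<bar>a\<bar> ^ q = int m ^ q" by (metis power_abs abs_of_nat)
  then have "\<bar>a\<bar> = int m" using power_eq_imp_eq_base[of "\<bar>a\<bar>" q "int m"] o by simp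
  then have "a = int m \<or> a = - int m" by auto
  then show ?thesis using ma by blast
qed


lemma gconj: "g [^] (j::int) \<otimes> g [^] (n::int) \<otimes> inv (g [^] j) = g [^] n"
proof -
  have "g [^] j \<otimes> g [^] n = g [^] n \<otimes> g [^] j"
    using int_pow_mult[OF g_carrier, of j n] int_pow_mult[OF g_carrier, of n j] by (simp add: add.commute)
  then show ?thesis using g_carrier by simp
qed

lemma fin_order: assumes kc: "k \<in> carrier G" and S: "finite S" "\<forall>n::nat. k [^] n \<in> S"
  shows "\<exists>q::nat. q > 0 \<and> k [^] q = \<one>"
proof -
  have "\<not> inj (\<lambda>n::nat. k [^] n)"
  proof
    assume "inj (\<lambda>n::nat. k [^] n)"
    then have "infinite (range (\<lambda>n::nat. k [^] n))" using finite_imageD by blast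
    moreover have "range (\<lambda>n::nat. k [^] n) \<subseteq> S" using S by auto
    ultimately show False using S(1) finite_subset by blast
  qed
  then obtain a b :: nat where ab: "k [^] a = k [^] b" "a \<noteq> b" unfolding inj_def by blast
  have gen: "\<exists>q::nat. q > 0 \<and> k [^] q = \<one>" if e: "k [^] a' = k [^] b'" and lt: "a' < b'" for a' b' :: nat
  proof -
    have "k [^] b' = k [^] a' \<otimes> k [^] (b' - a')" using nat_pow_mult[OF kc, of a' "b' - a'"] lt by simp
    then have "k [^] (b' - a') = inv (k [^] a') \<otimes> k [^] b'" using kc by (simp add: m_assoc[symmetric])
    then have "k [^] (b' - a') = \<one>" using e kc by simp
    then show ?thesis using lt by (intro exI[of _ "b' - a'"]) auto
  qed
  show ?thesis
  proof (cases "a < b")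
    case True then show ?thesis using gen ab by blast
  next
    case False then have "b < a" using ab by simp
    then show ?thesis using gen ab by metis
  qed
qed

lemma SL_comm: assumes kc: "k \<in> carrier G"
  and P: "k \<otimes> g [^] (int P) \<otimes> inv k = g [^] (int P) \<or> k \<otimes> g [^] (int P) \<otimes> inv k = g [^] (- int P)"
  and M: "M = P * T"
  shows "\<exists>n'. k \<otimes> g [^] (int M * n) = g [^] (int M * n') \<otimes> k"
proof -
  have "k \<otimes> g [^] (int M * n) \<otimes> inv k = k \<otimes> (g [^] (int P)) [^] (int T * n) \<otimes> inv k"
    using int_pow_pow[OF g_carrier, of "int P" "int T * n"] M by (simp add: mult.assoc)
  also have "\<dots> = (k \<otimes> g [^] (int P) \<otimes> inv k) [^] (int T * n)" using conj_pow[OF kc] g_carrier by simp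
  finally have e: "k \<otimes> g [^] (int M * n) \<otimes> inv k = (k \<otimes> g [^] (int P) \<otimes> inv k) [^] (int T * n)" .
  obtain n' where n': "k \<otimes> g [^] (int M * n) \<otimes> inv k = g [^] (int M * n')"
  proof (cases "k \<otimes> g [^] (int P) \<otimes> inv k = g [^] (int P)")
    case True
    then have "k \<otimes> g [^] (int M * n) \<otimes> inv k = g [^] (int M * n)"
      using e int_pow_pow[OF g_carrier, of "int P" "int T * n"] M by (simp add: mult.assoc)
    then show ?thesis using that by blast
  next
    case False
    then have "k \<otimes> g [^] (int P) \<otimes> inv k = g [^] (- int P)" using P by simp
    then have "k \<otimes> g [^] (int M * n) \<otimes> inv k = g [^] (int M * (- n))"
      using e int_pow_pow[OF g_carrier, of "- int P" "int T * n"] M by (simp add: mult.assoc)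
    then show ?thesis using that by blast
  qed
  have "k \<otimes> g [^] (int M * n) = (k \<otimes> g [^] (int M * n) \<otimes> inv k) \<otimes> k" using kc g_carrier by simp
  then show ?thesis using n' by auto
qed

lemma SL: assumes K: "subgroup K G"
  and P: "\<forall>k\<in>K. k \<otimes> g [^] (int P) \<otimes> inv k = g [^] (int P) \<or> k \<otimes> g [^] (int P) \<otimes> inv k = g [^] (- int P)"
  and M: "M = P * T"
  and u: "u \<in> generate G ({g [^] M} \<union> K)"
  shows "\<exists>i::int. \<exists>k\<in>K. u = g [^] (int M * i) \<otimes> k"
  using u
proof (induction rule: generate.induct)
  case one
  then show ?case using subgroup.one_closed[OF K] by (intro exI[of _ 0] bexI[of _ \<one>]) auto
next
  case (incl h)
  then show ?case
  proof
    assume "h \<in> {g [^] M}"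
    then have "h = g [^] (int M * 1) \<otimes> \<one>" using g_carrier by (simp add: int_pow_int)
    then show ?thesis using subgroup.one_closed[OF K] by blast
  next
    assume h: "h \<in> K"
    then have "h = g [^] (int M * 0) \<otimes> h" using subgroup.subset[OF K] by auto
    then show ?thesis using h by blast
  qed
next
  case (inv h)
  then show ?case
  proof
    assume "h \<in> {g [^] M}"
    then have "inv h = g [^] (int M * (-1)) \<otimes> \<one>" using g_carrier int_pow_neg[OF g_carrier, of "int M"] by (simp add: int_pow_int)
    then show ?thesis using subgroup.one_closed[OF K] by blast
  next
    assume h: "h \<in> K"
    then have "inv h = g [^] (int M * 0) \<otimes> inv h" using subgroup.subset[OF K] by auto
    then show ?thesis using h subgroup.m_inv_closed[OF K] by blast
  qed
next
  case (eng h1 h2)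
  obtain i k where ik: "k \<in> K" "h1 = g [^] (int M * i) \<otimes> k" using eng by blast
  obtain j k' where jk: "k' \<in> K" "h2 = g [^] (int M * j) \<otimes> k'" using eng by blast
  have kc: "k \<in> carrier G" "k' \<in> carrier G" using ik jk subgroup.subset[OF K] by auto
  obtain j' where j': "k \<otimes> g [^] (int M * j) = g [^] (int M * j') \<otimes> k" using SL_comm[OF kc(1) _ M] P ik by blast
  have "h1 \<otimes> h2 = g [^] (int M * i) \<otimes> (k \<otimes> g [^] (int M * j)) \<otimes> k'"
    using ik jk kc g_carrier by (simp add: m_assoc)
  also have "\<dots> = g [^] (int M * i) \<otimes> g [^] (int M * j') \<otimes> (k \<otimes> k')"
    using j' kc g_carrier by (simp add: m_assoc)
  also have "\<dots> = g [^] (int M * (i + j')) \<otimes> (k \<otimes> k')"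
    using int_pow_mult[OF g_carrier] by (simp add: distrib_left)
  finally show ?case using subgroup.m_closed[OF K ik(1) jk(1)] by blast
qed


lemma conjdisp: "k \<in> carrier G \<Longrightarrow> dist x0 (\<phi> (inv (g [^] (j::int)) \<otimes> k \<otimes> g [^] j) x0) = dist (orb j) (\<phi> k (orb j))"
proof -
  assume kc: "k \<in> carrier G"
  have gc: "g [^] j \<in> carrier G" using g_carrier by simp
  have "\<phi> (inv (g [^] j) \<otimes> k \<otimes> g [^] j) x0 = \<phi> (inv (g [^] j)) (\<phi> k (orb j))"
    unfolding orb_def using act_mult kc gc by simp
  moreover have "x0 = \<phi> (inv (g [^] j)) (orb j)" unfolding orb_def using act_inv1[OF gc] by simp
  ultimately show ?thesis using iso[of "inv (g [^] j)"] gc by simp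
qed

lemma conj_npow: "k \<in> carrier G \<Longrightarrow> (inv (g [^] (j::int)) \<otimes> k \<otimes> g [^] j) [^] (n::nat) = inv (g [^] j) \<otimes> k [^] n \<otimes> g [^] j"
proof -
  assume kc: "k \<in> carrier G"
  have gc: "inv (g [^] j) \<in> carrier G" using g_carrier by simp
  have "inv (g [^] j) \<otimes> k [^] (int n) \<otimes> inv (inv (g [^] j)) = (inv (g [^] j) \<otimes> k \<otimes> inv (inv (g [^] j))) [^] (int n)"
    using conj_pow[OF gc kc] by blast
  then show ?thesis using g_carrier by (simp add: int_pow_int)
qed

theorem main_loc:
  fixes \<epsilon> \<theta> :: real
  assumes eps: "\<epsilon> \<ge> 0" and th: "\<theta> \<ge> 0"
  shows "\<exists>M::nat. M \<ge> 1 \<and>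
    (\<forall>H Y. subgroup H G \<longrightarrow> Y \<noteq> {} \<longrightarrow> (\<forall>h\<in>H. \<phi> h ` Y = Y) \<longrightarrow>
       (\<forall>y\<in>Y. \<forall>z\<in>Y. dist (\<pi> y) (\<pi> z) \<le> \<epsilon>) \<longrightarrow>
       (\<forall>u \<in> generate G ({g [^] M} \<union> (H \<inter> EE)) - (H \<inter> EE).
          proj_dist \<pi> Y (\<phi> u ` Y) > \<theta>))"
proof -
  obtain C1 where C1: "\<forall>u\<in>EE. \<forall>x. dist (\<pi> (\<phi> u x)) (\<phi> u (\<pi> x)) \<le> C1" using lemU by blast
  have C1pos: "C1 \<ge> 0" using C1 E_gpow[of 0] by (meson order_trans zero_le_dist)
  define c2 where "c2 = \<epsilon> + C1 + 2 * \<delta>"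
  define F2 where "F2 = {h \<in> carrier G. h \<in> EE \<and> dist x0 (\<phi> h x0) \<le> c2 \<and> (\<exists>q::nat. q > 0 \<and> h [^] q = \<one>)}"
  have F2fin: "finite F2"
    using fin_disp_set[of x0 c2] by (rule finite_subset[rotated]) (auto simp: F2_def)
  define mk where "mk h = (SOME m::nat. m > 0 \<and> (h \<otimes> g [^] (int m) \<otimes> inv h = g [^] (int m) \<or> h \<otimes> g [^] (int m) \<otimes> inv h = g [^] (- int m)))" for h
  have mk: "mk h > 0 \<and> (h \<otimes> g [^] (int (mk h)) \<otimes> inv h = g [^] (int (mk h)) \<or> h \<otimes> g [^] (int (mk h)) \<otimes> inv h = g [^] (- int (mk h)))"
    if h: "h \<in> F2" for h
  proof -
    obtain q :: nat where q: "q > 0" "h [^] q = \<one>" using h unfolding F2_def by blast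
    have "h \<in> EE" using h unfolding F2_def by blast
    then have "\<exists>m::nat. m > 0 \<and> (h \<otimes> g [^] (int m) \<otimes> inv h = g [^] (int m) \<or> h \<otimes> g [^] (int m) \<otimes> inv h = g [^] (- int m))"
      using KF q by blast
    then show ?thesis unfolding mk_def by (rule someI_ex)
  qed
  define P where "P = (\<Prod>h\<in>F2. mk h)"
  have Ppos: "P > 0" unfolding P_def using mk by (intro prod_pos) auto
  have Pprop: "h \<otimes> g [^] (int P) \<otimes> inv h = g [^] (int P) \<or> h \<otimes> g [^] (int P) \<otimes> inv h = g [^] (- int P)"
    if h: "h \<in> F2" for h
  proof -
    have hc: "h \<in> carrier G" using h unfolding F2_def by blast
    have "mk h dvd P" unfolding P_def using F2fin h by (rule dvd_prodI)
    then obtain r where r: "P = mk h * r" by blast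
    have e: "h \<otimes> g [^] (int P) \<otimes> inv h = (h \<otimes> g [^] (int (mk h)) \<otimes> inv h) [^] (int r)"
      using conj_pow[OF hc, of "g [^] (int (mk h))" "int r"] int_pow_pow[OF g_carrier, of "int (mk h)" "int r"] r g_carrier
      by simp
    show ?thesis
    proof (cases "h \<otimes> g [^] (int (mk h)) \<otimes> inv h = g [^] (int (mk h))")
      case True
      then show ?thesis using e int_pow_pow[OF g_carrier, of "int (mk h)" "int r"] r by simp
    next
      case False
      then have "h \<otimes> g [^] (int (mk h)) \<otimes> inv h = g [^] (- int (mk h))" using mk[OF h] by simp
      then show ?thesis using e int_pow_pow[OF g_carrier, of "- int (mk h)" "int r"] r by simp
    qed
  qed
  obtain B where B: "\<forall>n. dist x0 (orb n) \<le> \<theta> + 1 + 3 * c2 \<longrightarrow> \<bar>n\<bar> \<le> int B" using orb_bound by blast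
  define M where "M = P * (B + 1)"
  have M1: "M \<ge> 1" unfolding M_def using Ppos by simp
  have "1 * (B + 1) \<le> P * (B + 1)" using Ppos by (intro mult_le_mono1) simp
  then have "B + 1 \<le> M" unfolding M_def by simp
  then have MB: "int M \<ge> int B + 1" by linarith
  have "\<forall>H Y. subgroup H G \<longrightarrow> Y \<noteq> {} \<longrightarrow> (\<forall>h\<in>H. \<phi> h ` Y = Y) \<longrightarrow>
       (\<forall>y\<in>Y. \<forall>z\<in>Y. dist (\<pi> y) (\<pi> z) \<le> \<epsilon>) \<longrightarrow>
       (\<forall>u \<in> generate G ({g [^] M} \<union> (H \<inter> EE)) - (H \<inter> EE). proj_dist \<pi> Y (\<phi> u ` Y) > \<theta>)"
  proof (intro allI impI ballI)
    fix H Y u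
    assume H: "subgroup H G" and Yne: "Y \<noteq> {}" and Yinv: "\<forall>h\<in>H. \<phi> h ` Y = Y"
      and Ydiam: "\<forall>y\<in>Y. \<forall>z\<in>Y. dist (\<pi> y) (\<pi> z) \<le> \<epsilon>"
      and u: "u \<in> generate G ({g [^] M} \<union> (H \<inter> EE)) - (H \<inter> EE)"
    define K where "K = H \<inter> EE"
    have Ksub: "subgroup K G" unfolding K_def using subgroups_Inter_pair[OF H E_sub] .
    obtain y where y: "y \<in> Y" using Yne by blast
    obtain j where j: "dist (orb j) (\<pi> y) \<le> \<delta>" using orb_near pi_in by blast
    have kbound: "dist (orb j) (\<phi> k (orb j)) \<le> c2" if k: "k \<in> K" for k
    proof -
      have kE: "k \<in> EE" and kH: "k \<in> H" using k unfolding K_def by auto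
      have kc: "k \<in> carrier G" using kE E_sub subgroup.subset by blast
      have "\<phi> k y \<in> Y" using Yinv kH y by blast
      then have d1: "dist (\<pi> y) (\<pi> (\<phi> k y)) \<le> \<epsilon>" using Ydiam y by blast
      have d2: "dist (\<pi> (\<phi> k y)) (\<phi> k (\<pi> y)) \<le> C1" using C1 kE by blast
      have d3: "dist (\<phi> k (\<pi> y)) (\<phi> k (orb j)) \<le> \<delta>" using iso[OF kc] j by (simp add: dist_commute)
      have "dist (orb j) (\<phi> k (orb j)) \<le> dist (orb j) (\<pi> y) + dist (\<pi> y) (\<pi> (\<phi> k y)) + dist (\<pi> (\<phi> k y)) (\<phi> k (\<pi> y)) + dist (\<phi> k (\<pi> y)) (\<phi> k (orb j))"
        using dist_triangle[of "orb j" "\<phi> k (orb j)" "\<pi> y"] dist_triangle[of "\<pi> y" "\<phi> k (orb j)" "\<pi> (\<phi> k y)"]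
          dist_triangle[of "\<pi> (\<phi> k y)" "\<phi> k (orb j)" "\<phi> k (\<pi> y)"] by linarith
      then show ?thesis using d1 d2 d3 j unfolding c2_def by linarith
    qed
    have kF: "inv (g [^] j) \<otimes> k \<otimes> g [^] j \<in> F2" if k: "k \<in> K" for k
    proof -
      have kc: "k \<in> carrier G" using k subgroup.subset[OF Ksub] by blast
      have kE: "k \<in> EE" using k unfolding K_def by auto
      let ?k' = "inv (g [^] j) \<otimes> k \<otimes> g [^] j"
      have c: "?k' \<in> carrier G" using kc g_carrier by simp
      have e: "?k' \<in> EE" using E_mult E_inv E_gpow kE by blast
      have d: "dist x0 (\<phi> ?k' x0) \<le> c2" using conjdisp[OF kc] kbound[OF k] by simp
      have "\<forall>n::nat. ?k' [^] n \<in> {h \<in> carrier G. dist x0 (\<phi> h x0) \<le> c2}"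
      proof
        fix n :: nat
        have kn: "k [^] n \<in> K" using subgroup_int_pow_closed[OF Ksub k, of "int n"] by (simp add: int_pow_int)
        have knc: "k [^] n \<in> carrier G" using kc by simp
        have "dist x0 (\<phi> (?k' [^] n) x0) \<le> c2" using conj_npow[OF kc] conjdisp[OF knc] kbound[OF kn] by simp
        then show "?k' [^] n \<in> {h \<in> carrier G. dist x0 (\<phi> h x0) \<le> c2}" using c by simp
      qed
      then have "\<exists>q::nat. q > 0 \<and> ?k' [^] q = \<one>" using fin_order[OF c fin_disp_set] by blast
      then show ?thesis unfolding F2_def using c e d by blast
    qed
    have kP: "k \<otimes> g [^] (int P) \<otimes> inv k = g [^] (int P) \<or> k \<otimes> g [^] (int P) \<otimes> inv k = g [^] (- int P)"
      if k: "k \<in> K" for k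
    proof -
      have kc: "k \<in> carrier G" using k subgroup.subset[OF Ksub] by blast
      let ?k' = "inv (g [^] j) \<otimes> k \<otimes> g [^] j"
      have c: "?k' \<in> carrier G" using kc g_carrier by simp
      have gj: "g [^] j \<in> carrier G" using g_carrier by simp
      interpret CH: group_hom G G "\<lambda>z. g [^] j \<otimes> z \<otimes> inv (g [^] j)" by (rule conj_hom[OF gj])
      have psik: "g [^] j \<otimes> ?k' \<otimes> inv (g [^] j) = k" using kc gj by (simp add: m_assoc[symmetric])
      have psig: "g [^] j \<otimes> g [^] n \<otimes> inv (g [^] j) = g [^] n" for n :: int by (rule gconj)
      have "g [^] j \<otimes> (?k' \<otimes> g [^] (int P) \<otimes> inv ?k') \<otimes> inv (g [^] j) = k \<otimes> g [^] (int P) \<otimes> inv k"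
        using CH.hom_mult[of "?k' \<otimes> g [^] (int P)" "inv ?k'"] CH.hom_mult[of ?k' "g [^] (int P)"]
          CH.hom_inv[of ?k'] c g_carrier psik psig[of "int P"] by simp
      then show ?thesis using Pprop[OF kF[OF k]] psig by metis
    qed
    have kPb: "\<forall>k\<in>K. k \<otimes> g [^] (int P) \<otimes> inv k = g [^] (int P) \<or> k \<otimes> g [^] (int P) \<otimes> inv k = g [^] (- int P)"
      using kP by blast
    have uK: "u \<in> generate G ({g [^] M} \<union> K)" using u unfolding K_def by blast
    obtain i k where ik: "k \<in> K" "u = g [^] (int M * i) \<otimes> k"
      using SL[OF Ksub kPb M_def uK] by blast
    have kc: "k \<in> carrier G" using ik subgroup.subset[OF Ksub] by blast
    have i0: "i \<noteq> 0"
    proof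
      assume "i = 0"
      then have "u = k" using ik kc by simp
      then show False using u ik unfolding K_def by blast
    qed
    have "\<bar>i\<bar> \<ge> 1" using i0 by linarith
    then have "int M * 1 \<le> int M * \<bar>i\<bar>" by (intro mult_left_mono) auto
    then have "\<bar>int M * i\<bar> \<ge> int M" by (simp add: abs_mult)
    then have far: "dist x0 (orb (int M * i)) > \<theta> + 1 + 3 * c2"
      using B[rule_format, of "int M * i"] MB by linarith
    have gsub: "generate G ({g [^] M} \<union> (H \<inter> EE)) \<subseteq> EE"
    proof (rule generate_subgroup_incl[OF _ E_sub])
      show "{g [^] M} \<union> (H \<inter> EE) \<subseteq> EE" using E_gpow[of "int M"] by (auto simp: int_pow_int)
    qed
    have uE: "u \<in> EE" using u gsub by blast
    have uc: "u \<in> carrier G" using uE E_sub subgroup.subset by blast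
    have uj: "dist (orb j) (\<phi> u (orb j)) \<ge> dist x0 (orb (int M * i)) - c2"
    proof -
      have gc: "g [^] (int M * i) \<in> carrier G" using g_carrier by simp
      have e1: "\<phi> u (orb j) = \<phi> (g [^] (int M * i)) (\<phi> k (orb j))" using ik act_mult gc kc by simp
      have e2: "orb (j + int M * i) = \<phi> (g [^] (int M * i)) (orb j)"
        unfolding orb_def using act_mult g_carrier int_pow_mult[OF g_carrier, of "int M * i" j] by (simp add: add.commute)
      have "dist (orb (j + int M * i)) (\<phi> u (orb j)) = dist (orb j) (\<phi> k (orb j))" using e1 e2 iso[OF gc] by simp
      then have "dist (orb (j + int M * i)) (\<phi> u (orb j)) \<le> c2" using kbound[OF ik(1)] by simp
      moreover have "dist (orb j) (orb (j + int M * i)) = dist x0 (orb (int M * i))" using orb_dist by simp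
      moreover have "dist (orb j) (orb (j + int M * i)) \<le> dist (orb j) (\<phi> u (orb j)) + dist (orb (j + int M * i)) (\<phi> u (orb j))"
        using dist_triangle[of "orb j" "orb (j + int M * i)" "\<phi> u (orb j)"] by (simp add: dist_commute)
      ultimately show ?thesis by linarith
    qed
    have lb: "dist (\<pi> y1) (\<pi> (\<phi> u y2)) \<ge> \<theta> + 1" if y1: "y1 \<in> Y" and y2: "y2 \<in> Y" for y1 y2
    proof -
      have yy1: "dist (\<pi> y) (\<pi> y1) \<le> \<epsilon>" using Ydiam y y1 by blast
      have yy2: "dist (\<pi> y2) (\<pi> y) \<le> \<epsilon>" using Ydiam y y2 by blast
      have a1: "dist (orb j) (\<pi> y1) \<le> c2"
        using j yy1 dist_triangle[of "orb j" "\<pi> y1" "\<pi> y"] C1pos delta_ge0 unfolding c2_def by linarith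
      have a2: "dist (\<pi> y2) (orb j) \<le> \<epsilon> + \<delta>"
        using j yy2 dist_triangle[of "\<pi> y2" "orb j" "\<pi> y"] by (simp add: dist_commute)
      have a3: "dist (\<pi> (\<phi> u y2)) (\<phi> u (\<pi> y2)) \<le> C1" using C1 uE by blast
      have a4: "dist (\<phi> u (\<pi> y2)) (\<phi> u (orb j)) \<le> \<epsilon> + \<delta>" using iso[OF uc] a2 by simp
      have "dist (orb j) (\<phi> u (orb j)) \<le> dist (orb j) (\<pi> y1) + dist (\<pi> y1) (\<pi> (\<phi> u y2)) + dist (\<pi> (\<phi> u y2)) (\<phi> u (\<pi> y2)) + dist (\<phi> u (\<pi> y2)) (\<phi> u (orb j))"
        using dist_triangle[of "orb j" "\<phi> u (orb j)" "\<pi> y1"] dist_triangle[of "\<pi> y1" "\<phi> u (orb j)" "\<pi> (\<phi> u y2)"]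
          dist_triangle[of "\<pi> (\<phi> u y2)" "\<phi> u (orb j)" "\<phi> u (\<pi> y2)"] by linarith
      then show ?thesis using a1 a3 a4 uj far delta_ge0 unfolding c2_def by argo
    qed
    have "proj_dist \<pi> Y (\<phi> u ` Y) \<ge> \<theta> + 1"
      unfolding proj_dist_def
    proof (rule cInf_greatest)
      show "{dist (\<pi> y) (\<pi> z) |y z. y \<in> Y \<and> z \<in> \<phi> u ` Y} \<noteq> {}" using y by blast
      show "\<And>x. x \<in> {dist (\<pi> y) (\<pi> z) |y z. y \<in> Y \<and> z \<in> \<phi> u ` Y} \<Longrightarrow> \<theta> + 1 \<le> x" using lb by blast
    qed
    then show "proj_dist \<pi> Y (\<phi> u ` Y) > \<theta>" by linarith
  qed
  then show ?thesis using M1 by blast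
qed

end

theorem mainTheorem18:
  fixes G :: "('g, 'm) monoid_scheme" and \<phi> :: "'g \<Rightarrow> 'x::metric_space \<Rightarrow> 'x"
    and \<Gamma> :: "'x pth set" and \<mu> \<nu> \<delta> :: real and g :: 'g and A :: "'x set" and \<pi> :: "'x \<Rightarrow> 'x"
  assumes "path_system_group \<mu> \<nu> G \<phi> \<Gamma>"
    and "constricting_element G \<phi> \<Gamma> \<delta> g A \<pi>"
    and "\<epsilon> \<ge> 0" and "\<theta> \<ge> 0"
  shows "\<exists>M::nat. M \<ge> 1 \<and>
    (\<forall>H Y. subgroup H G \<longrightarrow> Y \<noteq> {} \<longrightarrow> (\<forall>h\<in>H. \<phi> h ` Y = Y) \<longrightarrow>
       (\<forall>y\<in>Y. \<forall>z\<in>Y. dist (\<pi> y) (\<pi> z) \<le> \<epsilon>) \<longrightarrow>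
       (\<forall>u \<in> generate G ({g [^]\<^bsub>G\<^esub> M} \<union> (H \<inter> elem_closure G \<phi> A)) - (H \<inter> elem_closure G \<phi> A).
          proj_dist \<pi> Y (\<phi> u ` Y) > \<theta>))"
proof -
  interpret psg G \<phi> \<Gamma> \<mu> \<nu> \<delta> g A \<pi> using assms(1,2) by unfold_locales
  show ?thesis by (rule main_loc[OF assms(3) assms(4)])
qed

end
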